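(* The algebra $\mathcal{T}$ is closed under the induced product.
   Context: $\mathscr{P}$ is the set of partitions and $r_m(\lambda)$ the number of parts of $\lambda$ equal to $m$. The Faulhaber polynomial $F_l$ is the polynomial with zero constant term with $F_l(n)=\sum_{i=1}^n i^{l-1}$ for $n\ge1$. For $k\ge0,l\ge1$, $k+l$ even, $T_{k,l}(\lambda)=-\frac{B_{k+l}}{2(k+l)}(\delta_{l,1}+\delta_{k,0})+\sum_{m\ge1}m^kF_l(r_m(\lambda))$. $\mathcal{T}$ is the $\mathbb{Q}$-algebra generated by the $T_{k,l}$ under the pointwise product. The induced product $f\odot g$ of $f,g:\mathscr{P}\to\mathbb{Q}$ is defined by $\langle f\odot g\rangle_{\vec u}=\langle f\rangle_{\vec u}\langle g\rangle_{\vec u}$, where $\langle f\rangle_{\vec u}=\sum_\lambda f(\lambda)u_{\lambda_1}u_{\lambda_2}\cdots/\sum_\lambda u_{\lambda_1}u_{\lambda_2}\cdots\in\mathbb{Q}[[u_1,u_2,\ldots]]$. *)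

theory Defs
  imports Complex_Main "HOL-Library.Multiset"
begin

text \<open>Bernoulli numbers via the standard recurrence
  \<open>\<Sum>j\<le>n. (n+1 choose j) B_j = 0\<close> for n \<ge> 1, B_0 = 1 (so B_1 = -1/2;
  only even indices \<ge> 2 are used below).\<close>
fun bernoulli_num :: "nat \<Rightarrow> rat" where
  "bernoulli_num n =
     (if n = 0 then 1
      else - (\<Sum>j\<in>{..<n}. of_nat ((n + 1) choose j) * bernoulli_num j) / of_nat (n + 1))"

text \<open>A partition is represented by the multiset of its parts, i.e. a finite
  multiset of positive integers. Functions on partitions are functions
  \<open>nat multiset \<Rightarrow> rat\<close>; only their values on partitions matter.\<close>
definition is_partition :: "nat multiset \<Rightarrow> bool" where
  "is_partition p \<longleftrightarrow> 0 \<notin># p"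

definition r_mult :: "nat \<Rightarrow> nat multiset \<Rightarrow> nat" where
  "r_mult m p = count p m"

text \<open>Faulhaber polynomial evaluated at nonnegative integers:
  \<open>F_l(n) = \<Sum>_{i=1}^n i^{l-1}\<close> (F_l(0) = 0 as F_l has zero constant term).\<close>
definition faulhaber :: "nat \<Rightarrow> nat \<Rightarrow> rat" where
  "faulhaber l n = (\<Sum>i = 1..n. of_nat i ^ (l - 1))"

definition kron :: "nat \<Rightarrow> nat \<Rightarrow> rat" where
  "kron a b = (if a = b then 1 else 0)"

text \<open>\<open>T_{k,l}\<close>; the sum over m \<ge> 1 is restricted to the (finitely many) m
  with \<open>r_m(\<lambda>) > 0\<close>, the other terms vanish since F_l(0) = 0.\<close>
definition T_fun :: "nat \<Rightarrow> nat \<Rightarrow> nat multiset \<Rightarrow> rat" where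
  "T_fun k l p =
     - bernoulli_num (k + l) / (2 * of_nat (k + l)) * (kron l 1 + kron k 0)
     + (\<Sum>m\<in>{m. 1 \<le> m \<and> 0 < r_mult m p}. of_nat m ^ k * faulhaber l (r_mult m p))"

inductive_set T_alg :: "(nat multiset \<Rightarrow> rat) set" where
  gen: "1 \<le> l \<Longrightarrow> even (k + l) \<Longrightarrow> T_fun k l \<in> T_alg"
| const: "(\<lambda>_. c) \<in> T_alg"
| add: "f \<in> T_alg \<Longrightarrow> g \<in> T_alg \<Longrightarrow> (\<lambda>p. f p + g p) \<in> T_alg"
| mult: "f \<in> T_alg \<Longrightarrow> g \<in> T_alg \<Longrightarrow> (\<lambda>p. f p * g p) \<in> T_alg"
| smult: "f \<in> T_alg \<Longrightarrow> (\<lambda>p. c * f p) \<in> T_alg"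

text \<open>An element of \<open>\<rat>[[u_1,u_2,\<dots>]]\<close> is its coefficient function on
  monomials; the monomial \<open>u_{a_1}\<cdots>u_{a_n}\<close> is identified with the multiset
  {#a_1,...,a_n#} (a_i \<ge> 1). Multisets containing 0 correspond to no monomial
  (junk coordinates; all series considered below vanish there).\<close>
type_synonym series = "nat multiset \<Rightarrow> rat"

definition ser_mult :: "series \<Rightarrow> series \<Rightarrow> series" where
  "ser_mult a b \<nu> = (\<Sum>\<mu>\<in>{\<mu>. \<mu> \<subseteq># \<nu>}. a \<mu> * b (\<nu> - \<mu>))"

definition gen_series :: "(nat multiset \<Rightarrow> rat) \<Rightarrow> series" where
  "gen_series f \<nu> = (if is_partition \<nu> then f \<nu> else 0)"

text \<open>\<open>\<langle>f\<rangle>_u\<close>: the quotient of \<open>\<Sum>_\<lambda> f(\<lambda>) u_\<lambda>\<close> by \<open>\<Sum>_\<lambda> u_\<lambda>\<close>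
  (the latter has constant term 1, hence is invertible; the quotient is
  the unique series q with q \<cdot> \<Sum>_\<lambda> u_\<lambda> = \<Sum>_\<lambda> f(\<lambda>) u_\<lambda>).\<close>
definition u_bracket :: "(nat multiset \<Rightarrow> rat) \<Rightarrow> series" where
  "u_bracket f = (THE q. ser_mult q (gen_series (\<lambda>_. 1)) = gen_series f)"

end

theory Submission
  imports Defs "HOL-Library.FuncSet" "HOL-Computational_Algebra.Polynomial"
begin


lemma finite_submsets[simp]: "finite {\<mu>. \<mu> \<subseteq># (\<nu>::'a multiset)}"
proof (induction \<nu>)
  case empty
  then show ?case by simp
next
  case (add x \<nu>)
  have "{\<mu>. \<mu> \<subseteq># add_mset x \<nu>} \<subseteq> {\<mu>. \<mu> \<subseteq># \<nu>} \<union> add_mset x ` {\<mu>. \<mu> \<subseteq># \<nu>}"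
  proof
    fix \<mu> assume "\<mu> \<in> {\<mu>. \<mu> \<subseteq># add_mset x \<nu>}"
    then have h: "\<mu> \<subseteq># add_mset x \<nu>" by simp
    show "\<mu> \<in> {\<mu>. \<mu> \<subseteq># \<nu>} \<union> add_mset x ` {\<mu>. \<mu> \<subseteq># \<nu>}"
    proof (cases "x \<in># \<mu>")
      case True
      then have "\<mu> = add_mset x (\<mu> - {#x#})" by simp
      moreover have "\<mu> - {#x#} \<subseteq># \<nu>" using h True
        by (metis insert_DiffM add_mset_remove_trivial insert_subset_eq_iff)
      ultimately show ?thesis by blast
    next
      case False
      then have "\<mu> \<subseteq># \<nu>" using h
        by (metis Diff_eq_empty_iff_mset minus_add_mset_if_not_in_lhs)
      then show ?thesis by blast
    qed
  qed
  then show ?case using add by (meson finite_UnI finite_imageI finite_subset)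
qed

abbreviation SM where "SM \<equiv> ser_mult"

definition one_ser :: series where "one_ser \<nu> = (if \<nu> = {#} then 1 else 0)"
definition Gs :: series where "Gs = gen_series (\<lambda>_. 1)"
definition Ginv :: series where
  "Ginv \<nu> = (if is_partition \<nu> \<and> (\<forall>x. count \<nu> x \<le> 1) then (-1) ^ size \<nu> else 0)"

lemma SM_comm: "SM a b = SM b a"
proof
  fix \<nu>
  show "SM a b \<nu> = SM b a \<nu>"
    unfolding ser_mult_def
    by (rule sum.reindex_bij_witness[of _ "\<lambda>\<mu>. \<nu> - \<mu>" "\<lambda>\<mu>. \<nu> - \<mu>"])
       (auto simp: subset_mset.diff_diff_right mult.commute)
qed

lemma SM_assoc: "SM (SM a b) c = SM a (SM b c)"
proof
  fix \<nu>
  have "SM (SM a b) c \<nu> = (\<Sum>\<rho>\<in>{\<mu>. \<mu> \<subseteq># \<nu>}. \<Sum>\<mu>\<in>{\<mu>'. \<mu>' \<subseteq># \<rho>}. a \<mu> * b (\<rho> - \<mu>) * c (\<nu> - \<rho>))"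
    unfolding ser_mult_def by (simp add: sum_distrib_right)
  also have "\<dots> = (\<Sum>(\<rho>,\<mu>)\<in>Sigma {\<mu>. \<mu> \<subseteq># \<nu>} (\<lambda>\<rho>. {\<mu>'. \<mu>' \<subseteq># \<rho>}). a \<mu> * b (\<rho> - \<mu>) * c (\<nu> - \<rho>))"
    by (rule sum.Sigma) auto
  also have "\<dots> = (\<Sum>(\<mu>,\<sigma>)\<in>Sigma {\<mu>. \<mu> \<subseteq># \<nu>} (\<lambda>\<mu>. {\<sigma>. \<sigma> \<subseteq># \<nu> - \<mu>}). a \<mu> * (b \<sigma> * c (\<nu> - \<mu> - \<sigma>)))"
  proof (rule sum.reindex_bij_witness[of _ "\<lambda>(\<mu>,\<sigma>). (\<mu> + \<sigma>, \<mu>)" "\<lambda>(\<rho>,\<mu>). (\<mu>, \<rho> - \<mu>)"])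
    fix x assume "x \<in> Sigma {\<mu>. \<mu> \<subseteq># \<nu>} (\<lambda>\<rho>. {\<mu>'. \<mu>' \<subseteq># \<rho>})"
    then obtain \<rho> \<mu> where x: "x = (\<rho>,\<mu>)" "\<rho> \<subseteq># \<nu>" "\<mu> \<subseteq># \<rho>" by auto
    show "(case case x of (\<rho>, \<mu>) \<Rightarrow> (\<mu>, \<rho> - \<mu>) of (\<mu>, \<sigma>) \<Rightarrow> (\<mu> + \<sigma>, \<mu>)) = x"
      using x by auto
    show "(case x of (\<rho>, \<mu>) \<Rightarrow> (\<mu>, \<rho> - \<mu>)) \<in> Sigma {\<mu>. \<mu> \<subseteq># \<nu>} (\<lambda>\<mu>. {\<sigma>. \<sigma> \<subseteq># \<nu> - \<mu>})"
      using x by (auto intro: subset_mset.order_trans simp: subset_eq_diff_conv)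
    show "(case case x of (\<rho>, \<mu>) \<Rightarrow> (\<mu>, \<rho> - \<mu>) of (\<mu>, \<sigma>) \<Rightarrow> a \<mu> * (b \<sigma> * c (\<nu> - \<mu> - \<sigma>))) =
         (case x of (\<rho>, \<mu>) \<Rightarrow> a \<mu> * b (\<rho> - \<mu>) * c (\<nu> - \<rho>))"
      using x by (auto simp: diff_diff_add)
  next
    fix y assume "y \<in> Sigma {\<mu>. \<mu> \<subseteq># \<nu>} (\<lambda>\<mu>. {\<sigma>. \<sigma> \<subseteq># \<nu> - \<mu>})"
    then obtain \<mu> \<sigma> where y: "y = (\<mu>,\<sigma>)" "\<mu> \<subseteq># \<nu>" "\<sigma> \<subseteq># \<nu> - \<mu>" by auto
    show "(case case y of (\<mu>, \<sigma>) \<Rightarrow> (\<mu> + \<sigma>, \<mu>) of (\<rho>, \<mu>) \<Rightarrow> (\<mu>, \<rho> - \<mu>)) = y"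
      using y by auto
    show "(case y of (\<mu>, \<sigma>) \<Rightarrow> (\<mu> + \<sigma>, \<mu>)) \<in> Sigma {\<mu>. \<mu> \<subseteq># \<nu>} (\<lambda>\<rho>. {\<mu>'. \<mu>' \<subseteq># \<rho>})"
      using y by (auto simp: subset_mset.le_diff_conv2 add.commute)
  qed
  also have "\<dots> = (\<Sum>\<mu>\<in>{\<mu>. \<mu> \<subseteq># \<nu>}. \<Sum>\<sigma>\<in>{\<sigma>. \<sigma> \<subseteq># \<nu> - \<mu>}. a \<mu> * (b \<sigma> * c (\<nu> - \<mu> - \<sigma>)))"
    by (rule sum.Sigma[symmetric]) auto
  also have "\<dots> = SM a (SM b c) \<nu>"
    unfolding ser_mult_def by (simp add: sum_distrib_left)
  finally show "SM (SM a b) c \<nu> = SM a (SM b c) \<nu>" .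
qed

lemma SM_one: "SM a one_ser = a"
proof
  fix \<nu>
  have "SM a one_ser \<nu> = (\<Sum>\<mu>\<in>{\<mu>. \<mu> \<subseteq># \<nu>}. if \<mu> = \<nu> then a \<mu> else 0)"
    unfolding ser_mult_def one_ser_def
    by (rule sum.cong) (auto simp: subset_mset.antisym Diff_eq_empty_iff_mset)
  also have "\<dots> = a \<nu>" by (simp add: sum.delta)
  finally show "SM a one_ser \<nu> = a \<nu>" .
qed

interpretation SMac: abel_semigroup SM
  by unfold_locales (metis SM_assoc SM_comm)+

lemma setlike_mset_set:
  assumes "\<forall>x. count \<mu> x \<le> 1"
  shows "\<mu> = mset_set (set_mset \<mu>)"
proof (rule multiset_eqI)
  fix x show "count \<mu> x = count (mset_set (set_mset \<mu>)) x"
    using assms[rule_format, of x] by (cases "count \<mu> x") (auto simp: count_mset_set' count_eq_zero_iff[symmetric])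
qed

lemma alt_sum_Pow: "finite A \<Longrightarrow> (\<Sum>S\<in>Pow A. (-1::rat) ^ card S) = (if A = {} then 1 else 0)"
proof -
  assume fA: "finite A"
  have "(\<Prod>x\<in>A. (1::rat) - 1) = (\<Sum>X\<in>Pow A. (- 1) ^ card X * prod (\<lambda>_. 1) X * prod (\<lambda>_. 1) (A - X))"
    by (rule prod_diff_conv_sum[OF fA])
  then have "(\<Sum>X\<in>Pow A. (- 1::rat) ^ card X) = 0 ^ card A" by simp
  then show ?thesis using fA by (cases "A = {}") auto
qed

lemma Ginv_Gs: "SM Ginv Gs = one_ser"
proof
  fix \<nu>
  show "SM Ginv Gs \<nu> = one_ser \<nu>"
  proof (cases "is_partition \<nu>")
    case False
    then have z: "0 \<in># \<nu>" unfolding is_partition_def by simp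
    then have "\<nu> \<noteq> {#}" by auto
    have "SM Ginv Gs \<nu> = (\<Sum>\<mu>\<in>{\<mu>. \<mu> \<subseteq># \<nu>}. 0)"
      unfolding ser_mult_def
    proof (rule sum.cong)
      fix \<mu> assume "\<mu> \<in> {\<mu>. \<mu> \<subseteq># \<nu>}"
      show "Ginv \<mu> * Gs (\<nu> - \<mu>) = 0"
      proof (cases "0 \<in># \<mu>")
        case True then show ?thesis by (simp add: Ginv_def is_partition_def)
      next
        case False
        then have "0 \<in># \<nu> - \<mu>" using z by (simp add: in_diff_count not_in_iff)
        then show ?thesis by (simp add: Gs_def gen_series_def is_partition_def)
      qed
    qed simp
    then show ?thesis using \<open>\<nu> \<noteq> {#}\<close> by (simp add: one_ser_def)
  next
    case True
    let ?A = "set_mset \<nu>"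
    have "SM Ginv Gs \<nu> = (\<Sum>\<mu>\<in>{\<mu>. \<mu> \<subseteq># \<nu>}. Ginv \<mu>)"
      unfolding ser_mult_def
    proof (rule sum.cong)
      fix \<mu> assume "\<mu> \<in> {\<mu>. \<mu> \<subseteq># \<nu>}"
      then have "0 \<notin># \<nu> - \<mu>" using True unfolding is_partition_def by (meson in_diffD)
      then show "Ginv \<mu> * Gs (\<nu> - \<mu>) = Ginv \<mu>" by (simp add: Gs_def gen_series_def is_partition_def)
    qed simp
    also have "\<dots> = (\<Sum>\<mu>\<in>mset_set ` Pow ?A. Ginv \<mu>)"
    proof (rule sum.mono_neutral_right)
      show "mset_set ` Pow ?A \<subseteq> {\<mu>. \<mu> \<subseteq># \<nu>}"
      proof
        fix \<mu> assume "\<mu> \<in> mset_set ` Pow ?A"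
        then obtain S where S: "S \<subseteq> ?A" "\<mu> = mset_set S" by auto
        have "finite S" using S(1) finite_subset by blast
        show "\<mu> \<in> {\<mu>. \<mu> \<subseteq># \<nu>}"
          unfolding S(2) using S(1) \<open>finite S\<close>
          by (auto simp: subseteq_mset_def count_mset_set' Suc_le_eq)
      qed
      show "\<forall>\<mu>\<in>{\<mu>. \<mu> \<subseteq># \<nu>} - mset_set ` Pow ?A. Ginv \<mu> = 0"
      proof
        fix \<mu> assume a: "\<mu> \<in> {\<mu>. \<mu> \<subseteq># \<nu>} - mset_set ` Pow ?A"
        show "Ginv \<mu> = 0"
        proof (rule ccontr)
          assume "Ginv \<mu> \<noteq> 0"
          then have "\<forall>x. count \<mu> x \<le> 1" by (auto simp: Ginv_def split: if_splits)
          then have "\<mu> = mset_set (set_mset \<mu>)" by (rule setlike_mset_set)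
          moreover have "set_mset \<mu> \<subseteq> ?A" using a by (auto dest: mset_subset_eqD)
          ultimately show False using a by blast
        qed
      qed
    qed simp
    also have "\<dots> = (\<Sum>S\<in>Pow ?A. Ginv (mset_set S))"
    proof -
      have "inj_on mset_set (Pow ?A)"
        by (rule inj_onI) (metis PowD finite_set_mset finite_set_mset_mset_set rev_finite_subset)
      then show ?thesis by (simp add: sum.reindex)
    qed
    also have "\<dots> = (\<Sum>S\<in>Pow ?A. (-1) ^ card S)"
    proof (rule sum.cong)
      fix S assume "S \<in> Pow ?A"
      then have fS: "finite S" and "0 \<notin> S" using True finite_subset unfolding is_partition_def by auto
      then show "Ginv (mset_set S) = (-1) ^ card S"
        by (auto simp: Ginv_def is_partition_def count_mset_set')
    qed simp
    also have "\<dots> = one_ser \<nu>" by (simp add: alt_sum_Pow one_ser_def)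
    finally show ?thesis .
  qed
qed

lemma SM_Gs_split:
  "SM q Gs \<nu> = q \<nu> + (\<Sum>\<mu>\<in>{\<mu>. \<mu> \<subseteq># \<nu>} - {\<nu>}. q \<mu> * Gs (\<nu> - \<mu>))"
proof -
  have "SM q Gs \<nu> = q \<nu> * Gs (\<nu> - \<nu>) + (\<Sum>\<mu>\<in>{\<mu>. \<mu> \<subseteq># \<nu>} - {\<nu>}. q \<mu> * Gs (\<nu> - \<mu>))"
    unfolding ser_mult_def by (subst sum.remove[of _ \<nu>]) auto
  then show ?thesis by (simp add: Gs_def gen_series_def is_partition_def)
qed

lemma SM_Gs_inj:
  assumes "SM q Gs = SM q' Gs"
  shows "q = q'"
proof
  fix \<nu>
  show "q \<nu> = q' \<nu>"
  proof (induction "size \<nu>" arbitrary: \<nu> rule: less_induct)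
    case less
    have r: "(\<Sum>\<mu>\<in>{\<mu>. \<mu> \<subseteq># \<nu>} - {\<nu>}. q \<mu> * Gs (\<nu> - \<mu>)) = (\<Sum>\<mu>\<in>{\<mu>. \<mu> \<subseteq># \<nu>} - {\<nu>}. q' \<mu> * Gs (\<nu> - \<mu>))"
    proof (rule sum.cong)
      fix \<mu> assume "\<mu> \<in> {\<mu>. \<mu> \<subseteq># \<nu>} - {\<nu>}"
      then have "\<mu> \<subset># \<nu>" by (simp add: subset_mset.le_neq_trans)
      then have "size \<mu> < size \<nu>" by (rule mset_subset_size)
      then show "q \<mu> * Gs (\<nu> - \<mu>) = q' \<mu> * Gs (\<nu> - \<mu>)" using less by simp
    qed simp
    have "SM q Gs \<nu> = SM q' Gs \<nu>" using assms by simp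
    then show ?case using r by (simp add: SM_Gs_split)
  qed
qed

lemma u_bracket_eq: "u_bracket f = SM (gen_series f) Ginv"
  unfolding u_bracket_def
proof (rule the_equality)
  show "SM (SM (gen_series f) Ginv) (gen_series (\<lambda>_. 1)) = gen_series f"
    using Ginv_Gs by (simp add: SMac.assoc SM_one Gs_def[symmetric])
  fix q assume "SM q (gen_series (\<lambda>_. 1)) = gen_series f"
  then have "SM q Gs = SM (SM (gen_series f) Ginv) Gs"
    using Ginv_Gs by (simp add: SMac.assoc SM_one Gs_def[symmetric])
  then show "q = SM (gen_series f) Ginv" by (rule SM_Gs_inj)
qed

definition vp :: "series \<Rightarrow> bool" where "vp a \<longleftrightarrow> (\<forall>\<nu>. \<not> is_partition \<nu> \<longrightarrow> a \<nu> = 0)"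

lemma vp_SM: "vp a \<Longrightarrow> vp b \<Longrightarrow> vp (SM a b)"
  unfolding vp_def ser_mult_def is_partition_def
proof (intro allI impI sum.neutral ballI)
  fix \<nu> \<mu> :: "nat multiset"
  assume a: "\<forall>\<nu>. \<not> 0 \<notin># \<nu> \<longrightarrow> a \<nu> = 0" and b: "\<forall>\<nu>. \<not> 0 \<notin># \<nu> \<longrightarrow> b \<nu> = 0"
    and n: "\<not> 0 \<notin># \<nu>" and m: "\<mu> \<in> {\<mu>. \<mu> \<subseteq># \<nu>}"
  show "a \<mu> * b (\<nu> - \<mu>) = 0"
  proof (cases "0 \<in># \<mu>")
    case True then show ?thesis using a by simp
  next
    case False
    then have "0 \<in># \<nu> - \<mu>" using n by (simp add: in_diff_count not_in_iff)
    then show ?thesis using b by simp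
  qed
qed

lemma vp_gen: "vp (gen_series f)" by (simp add: vp_def gen_series_def)
lemma vp_Ginv: "vp Ginv" by (simp add: vp_def Ginv_def)

lemma reduce_main:
  assumes "h' \<in> T_alg" "\<forall>p. is_partition p \<longrightarrow> h' p = SM (SM (gen_series f) (gen_series g)) Ginv p"
  shows "\<exists>h\<in>T_alg. u_bracket h = ser_mult (u_bracket f) (u_bracket g)"
proof (intro bexI[OF _ assms(1)])
  let ?H = "SM (SM (gen_series f) (gen_series g)) Ginv"
  have vH: "vp ?H" by (intro vp_SM vp_gen vp_Ginv)
  have "gen_series h' = ?H"
  proof
    fix \<nu> show "gen_series h' \<nu> = ?H \<nu>"
      using assms(2) vH by (auto simp: gen_series_def vp_def)
  qed
  then show "u_bracket h' = ser_mult (u_bracket f) (u_bracket g)"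
    by (simp add: u_bracket_eq SMac.assoc SMac.commute SMac.left_commute)
qed


definition Af :: "nat \<Rightarrow> nat \<Rightarrow> nat multiset \<Rightarrow> rat" where
  "Af k l p = (\<Sum>m\<in>{m. 1 \<le> m \<and> 0 < r_mult m p}. of_nat m ^ k * faulhaber l (r_mult m p))"

definition Mon :: "(nat \<times> nat) list \<Rightarrow> nat multiset \<Rightarrow> rat" where
  "Mon L p = prod_list (map (\<lambda>(k,l). Af k l p) L)"

definition valid :: "(nat \<times> nat) list \<Rightarrow> bool" where
  "valid L \<longleftrightarrow> (\<forall>(k,l)\<in>set L. 1 \<le> l \<and> even (k + l))"

definition inT :: "(nat multiset \<Rightarrow> rat) \<Rightarrow> bool" where
  "inT f \<longleftrightarrow> (\<exists>h\<in>T_alg. \<forall>p. is_partition p \<longrightarrow> h p = f p)"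

lemma T_alg_Af: "1 \<le> l \<Longrightarrow> even (k + l) \<Longrightarrow> Af k l \<in> T_alg"
proof -
  assume "1 \<le> l" "even (k + l)"
  then have g: "T_fun k l \<in> T_alg" by (rule T_alg.gen)
  define c where "c = - bernoulli_num (k + l) / (2 * of_nat (k + l)) * (kron l 1 + kron k 0)"
  have "(\<lambda>p. T_fun k l p + (\<lambda>_. - c) p) \<in> T_alg" by (intro T_alg.add g T_alg.const)
  moreover have "(\<lambda>p. T_fun k l p + (\<lambda>_. - c) p) = Af k l"
    by (rule ext) (simp add: T_fun_def Af_def c_def)
  ultimately show ?thesis by simp
qed

lemma inT_T: "f \<in> T_alg \<Longrightarrow> inT f" unfolding inT_def by blast
lemma inT_const: "inT (\<lambda>_. c)" by (intro inT_T T_alg.const)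
lemma inT_add: "inT f \<Longrightarrow> inT g \<Longrightarrow> inT (\<lambda>p. f p + g p)"
  unfolding inT_def by (metis (no_types, lifting) T_alg.add)
lemma inT_mult: "inT f \<Longrightarrow> inT g \<Longrightarrow> inT (\<lambda>p. f p * g p)"
  unfolding inT_def by (metis (no_types, lifting) T_alg.mult)
lemma inT_smult: "inT f \<Longrightarrow> inT (\<lambda>p. c * f p)"
  unfolding inT_def by (metis (no_types, lifting) T_alg.smult)
lemma inT_cong: "inT f \<Longrightarrow> (\<And>p. is_partition p \<Longrightarrow> f p = g p) \<Longrightarrow> inT g"
  unfolding inT_def by metis
lemma inT_sum: "finite S \<Longrightarrow> (\<And>i. i \<in> S \<Longrightarrow> inT (F i)) \<Longrightarrow> inT (\<lambda>p. \<Sum>i\<in>S. F i p)"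
proof (induction S rule: finite_induct)
  case empty then show ?case by (simp add: inT_const)
next
  case (insert x S)
  then show ?case by (simp add: inT_add)
qed
lemma inT_prod: "finite S \<Longrightarrow> (\<And>i. i \<in> S \<Longrightarrow> inT (F i)) \<Longrightarrow> inT (\<lambda>p. \<Prod>i\<in>S. F i p)"
proof (induction S rule: finite_induct)
  case empty then show ?case by (simp add: inT_const)
next
  case (insert x S)
  then show ?case by (simp add: inT_mult)
qed

inductive_set LC :: "(nat multiset \<Rightarrow> rat) set" where
  mon: "valid L \<Longrightarrow> Mon L \<in> LC"
| add: "f \<in> LC \<Longrightarrow> g \<in> LC \<Longrightarrow> (\<lambda>p. f p + g p) \<in> LC"
| smult: "f \<in> LC \<Longrightarrow> (\<lambda>p. c * f p) \<in> LC"

lemma valid_append: "valid L \<Longrightarrow> valid L' \<Longrightarrow> valid (L @ L')"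
  unfolding valid_def by auto

lemma LC_mult_mon: "g \<in> LC \<Longrightarrow> valid L \<Longrightarrow> (\<lambda>p. Mon L p * g p) \<in> LC"
proof (induction g rule: LC.induct)
  case (mon L')
  have "(\<lambda>p. Mon L p * Mon L' p) = Mon (L @ L')" by (rule ext) (simp add: Mon_def)
  then show ?case using mon valid_append by (metis LC.mon)
next
  case (add f g)
  have "(\<lambda>p. Mon L p * (f p + g p)) = (\<lambda>p. (\<lambda>p. Mon L p * f p) p + (\<lambda>p. Mon L p * g p) p)"
    by (simp add: algebra_simps)
  then show ?case using add by (metis LC.add)
next
  case (smult f c)
  have "(\<lambda>p. Mon L p * (c * f p)) = (\<lambda>p. c * (\<lambda>p. Mon L p * f p) p)"
    by (simp add: algebra_simps)
  then show ?case using smult by (metis LC.smult)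
qed

lemma LC_mult: "f \<in> LC \<Longrightarrow> g \<in> LC \<Longrightarrow> (\<lambda>p. f p * g p) \<in> LC"
proof (induction f rule: LC.induct)
  case (mon L)
  then show ?case using LC_mult_mon by blast
next
  case (add f f')
  have "(\<lambda>p. (f p + f' p) * g p) = (\<lambda>p. (\<lambda>p. f p * g p) p + (\<lambda>p. f' p * g p) p)"
    by (simp add: algebra_simps)
  then show ?case using add by (metis LC.add)
next
  case (smult f c)
  have "(\<lambda>p. (c * f p) * g p) = (\<lambda>p. c * (\<lambda>p. f p * g p) p)"
    by (simp add: algebra_simps)
  then show ?case using smult by (metis LC.smult)
qed

lemma LC_const: "(\<lambda>_. c) \<in> LC"
proof -
  have "(\<lambda>p. c * Mon [] p) \<in> LC" by (intro LC.smult LC.mon) (simp add: valid_def)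
  then show ?thesis by (simp add: Mon_def)
qed

lemma T_sub_LC: "f \<in> T_alg \<Longrightarrow> f \<in> LC"
proof (induction f rule: T_alg.induct)
  case (gen l k)
  define c where "c = - bernoulli_num (k + l) / (2 * of_nat (k + l)) * (kron l 1 + kron k 0)"
  have "(\<lambda>p. (\<lambda>_. c) p + Mon [(k,l)] p) \<in> LC"
    using gen by (intro LC.add LC_const LC.mon) (simp add: valid_def)
  moreover have "(\<lambda>p. (\<lambda>_. c) p + Mon [(k,l)] p) = T_fun k l"
    by (rule ext) (simp add: T_fun_def Af_def c_def Mon_def)
  ultimately show ?case by simp
next
  case (const c) then show ?case by (rule LC_const)
next
  case (add f g) then show ?case by (blast intro: LC.add)
next
  case (mult f g) then show ?case by (blast intro: LC_mult)
next
  case (smult f c) then show ?case by (blast intro: LC.smult)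
qed

definition odotF :: "(nat multiset \<Rightarrow> rat) \<Rightarrow> (nat multiset \<Rightarrow> rat) \<Rightarrow> nat multiset \<Rightarrow> rat" where
  "odotF f g = SM (SM (gen_series f) (gen_series g)) Ginv"

lemma SM_add_left: "SM (\<lambda>\<nu>. a \<nu> + a' \<nu>) b = (\<lambda>\<nu>. SM a b \<nu> + SM a' b \<nu>)"
  unfolding ser_mult_def by (simp add: algebra_simps sum.distrib)
lemma SM_smult_left: "SM (\<lambda>\<nu>. c * a \<nu>) b = (\<lambda>\<nu>. c * SM a b \<nu>)"
  unfolding ser_mult_def by (simp add: algebra_simps sum_distrib_left)
lemma SM_add_right: "SM b (\<lambda>\<nu>. a \<nu> + a' \<nu>) = (\<lambda>\<nu>. SM b a \<nu> + SM b a' \<nu>)"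
  by (simp add: SM_comm[of b] SM_add_left)
lemma SM_smult_right: "SM b (\<lambda>\<nu>. c * a \<nu>) = (\<lambda>\<nu>. c * SM b a \<nu>)"
  by (simp add: SM_comm[of b] SM_smult_left)

lemma gen_add: "gen_series (\<lambda>p. f p + g p) = (\<lambda>\<nu>. gen_series f \<nu> + gen_series g \<nu>)"
  by (auto simp: gen_series_def)
lemma gen_smult: "gen_series (\<lambda>p. c * f p) = (\<lambda>\<nu>. c * gen_series f \<nu>)"
  by (auto simp: gen_series_def)

lemma odotF_add_left: "odotF (\<lambda>p. f p + f' p) g = (\<lambda>\<nu>. odotF f g \<nu> + odotF f' g \<nu>)"
  unfolding odotF_def by (simp add: gen_add SM_add_left)
lemma odotF_add_right: "odotF g (\<lambda>p. f p + f' p) = (\<lambda>\<nu>. odotF g f \<nu> + odotF g f' \<nu>)"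
  unfolding odotF_def by (simp add: gen_add SM_add_right SM_add_left)
lemma odotF_smult_left: "odotF (\<lambda>p. c * f p) g = (\<lambda>\<nu>. c * odotF f g \<nu>)"
  unfolding odotF_def by (simp add: gen_smult SM_smult_left)
lemma odotF_smult_right: "odotF g (\<lambda>p. c * f p) = (\<lambda>\<nu>. c * odotF g f \<nu>)"
  unfolding odotF_def by (simp add: gen_smult SM_smult_right SM_smult_left)

lemma reduce_LC:
  assumes key: "\<And>L L'. valid L \<Longrightarrow> valid L' \<Longrightarrow> inT (odotF (Mon L) (Mon L'))"
  assumes "f \<in> LC" "g \<in> LC"
  shows "inT (odotF f g)"
  using assms(2)
proof (induction f rule: LC.induct)
  case (mon L)
  show ?case using assms(3)
  proof (induction g rule: LC.induct)
    case (mon L') then show ?case using key \<open>valid L\<close> by blast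
  next
    case (add g g') then show ?case by (simp add: odotF_add_right inT_add)
  next
    case (smult g c) then show ?case by (simp add: odotF_smult_right inT_smult)
  qed
next
  case (add f f') then show ?case by (simp add: odotF_add_left inT_add)
next
  case (smult f c) then show ?case by (simp add: odotF_smult_left inT_smult)
qed

lemma final_from_key:
  assumes key: "\<And>L L'. valid L \<Longrightarrow> valid L' \<Longrightarrow> inT (odotF (Mon L) (Mon L'))"
  assumes "f \<in> T_alg" and "g \<in> T_alg"
  shows "\<exists>h\<in>T_alg. u_bracket h = ser_mult (u_bracket f) (u_bracket g)"
proof -
  have "inT (odotF f g)" using reduce_LC[OF key] T_sub_LC assms(2,3) by blast
  then obtain h' where "h' \<in> T_alg" "\<forall>p. is_partition p \<longrightarrow> h' p = odotF f g p"
    unfolding inT_def by blast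
  then show ?thesis using reduce_main unfolding odotF_def by blast
qed


lemma KL:
  fixes G :: "nat \<Rightarrow> nat \<Rightarrow> rat"
  assumes fM: "finite M" and sub: "set_mset \<nu> \<subseteq> M"
  shows "(\<Sum>\<mu>\<in>{\<mu>. \<mu> \<subseteq># \<nu>}. \<Prod>m\<in>M. G m (count \<mu> m)) = (\<Prod>m\<in>M. \<Sum>a\<in>{..count \<nu> m}. G m a)"
proof -
  define ms where "ms c = (\<Sum>m\<in>M. replicate_mset (c m) m)" for c :: "nat \<Rightarrow> nat"
  have cms: "count (ms c) x = (if x \<in> M then c x else 0)" for c x
    unfolding ms_def count_sum using fM by (auto simp: count_replicate_mset)
  have "(\<Prod>m\<in>M. \<Sum>a\<in>{..count \<nu> m}. G m a) = (\<Sum>c\<in>PiE M (\<lambda>m. {..count \<nu> m}). \<Prod>m\<in>M. G m (c m))"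
    using fM by (rule prod_sum_PiE) auto
  also have "\<dots> = (\<Sum>\<mu>\<in>{\<mu>. \<mu> \<subseteq># \<nu>}. \<Prod>m\<in>M. G m (count \<mu> m))"
  proof (rule sum.reindex_bij_witness[of _ "\<lambda>\<mu>. restrict (count \<mu>) M" ms])
    fix \<mu> assume "\<mu> \<in> {\<mu>. \<mu> \<subseteq># \<nu>}"
    then have m: "\<mu> \<subseteq># \<nu>" by simp
    then have "set_mset \<mu> \<subseteq> M" using sub by (meson mset_subset_eqD subset_iff)
    then show "ms (restrict (count \<mu>) M) = \<mu>"
      by (intro multiset_eqI) (auto simp: cms count_eq_zero_iff)
    show "restrict (count \<mu>) M \<in> PiE M (\<lambda>m. {..count \<nu> m})"
      using m by (auto simp: subseteq_mset_def)
  next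
    fix c assume c: "c \<in> PiE M (\<lambda>m. {..count \<nu> m})"
    show "(\<Prod>m\<in>M. G m (count (ms c) m)) = (\<Prod>m\<in>M. G m (c m))"
      by (rule prod.cong) (auto simp: cms)
    show "restrict (count (ms c)) M = c"
      using c by (auto simp: cms PiE_def extensional_def restrict_def)
    show "ms c \<in> {\<mu>. \<mu> \<subseteq># \<nu>}"
      using c by (auto simp: subseteq_mset_def cms PiE_def)
  qed
  finally show ?thesis by simp
qed

lemma prod_list_map_nth: "prod_list (map f xs) = (\<Prod>i<length xs. f (xs ! i))"
  by (induction xs) (auto simp: prod.lessThan_Suc_shift simp del: prod.lessThan_Suc)

lemma Af_partition:
  assumes "is_partition p" "\<alpha> \<subseteq># p"
  shows "Af k l \<alpha> = (\<Sum>m\<in>set_mset p. of_nat m ^ k * faulhaber l (count \<alpha> m))"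
proof -
  have "Af k l \<alpha> = (\<Sum>m\<in>{m. 1 \<le> m \<and> 0 < count \<alpha> m}. of_nat m ^ k * faulhaber l (count \<alpha> m))"
    by (simp add: Af_def r_mult_def)
  also have "\<dots> = (\<Sum>m\<in>set_mset p. of_nat m ^ k * faulhaber l (count \<alpha> m))"
  proof (rule sum.mono_neutral_left)
    show "{m. 1 \<le> m \<and> 0 < count \<alpha> m} \<subseteq> set_mset p"
      using assms(2) by (auto dest: mset_subset_eqD)
    show "\<forall>i\<in>set_mset p - {m. 1 \<le> m \<and> 0 < count \<alpha> m}. of_nat i ^ k * faulhaber l (count \<alpha> i) = 0"
      using assms(1) by (auto simp: faulhaber_def is_partition_def Suc_le_eq)
  qed simp
  finally show ?thesis .
qed

definition Efn :: "nat \<Rightarrow> rat" where "Efn c = (if c = 0 then 1 else if c = 1 then -1 else 0)"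

definition chiN :: "(nat \<Rightarrow> rat) \<Rightarrow> (nat \<Rightarrow> rat) \<Rightarrow> nat \<Rightarrow> rat" where
  "chiN \<phi> \<psi> n = (\<Sum>b\<le>n. (\<Sum>a\<le>b. \<phi> a * \<psi> (b - a)) * Efn (n - b))"

lemma Ginv_prod:
  assumes "is_partition p" "\<nu> \<subseteq># p"
  shows "Ginv \<nu> = (\<Prod>m\<in>set_mset p. Efn (count \<nu> m))"
proof -
  have pn: "is_partition \<nu>" using assms unfolding is_partition_def by (meson mset_subset_eqD)
  have sub: "set_mset \<nu> \<subseteq> set_mset p" using assms(2) by (meson mset_subset_eqD subsetI)
  show ?thesis
  proof (cases "\<forall>x. count \<nu> x \<le> 1")
    case True
    have "(\<Prod>m\<in>set_mset p. Efn (count \<nu> m)) = (\<Prod>m\<in>set_mset p. (-1) ^ count \<nu> m)"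
    proof (rule prod.cong)
      fix m show "Efn (count \<nu> m) = (-1) ^ count \<nu> m"
        using True[rule_format, of m] by (cases "count \<nu> m") (auto simp: Efn_def)
    qed simp
    also have "\<dots> = (-1) ^ (\<Sum>m\<in>set_mset p. count \<nu> m)" by (simp add: power_sum)
    also have "(\<Sum>m\<in>set_mset p. count \<nu> m) = size \<nu>"
      by (simp add: size_multiset_overloaded_eq sum.mono_neutral_right[OF _ sub] count_eq_zero_iff)
    finally show ?thesis using True pn by (simp add: Ginv_def)
  next
    case False
    then obtain x where x: "count \<nu> x > 1" by (auto simp: not_le)
    then have "x \<in> set_mset p" using sub by (meson count_greater_zero_iff less_trans subsetD zero_less_one)
    moreover have "Efn (count \<nu> x) = 0" using x by (simp add: Efn_def)
    ultimately have "(\<Prod>m\<in>set_mset p. Efn (count \<nu> m)) = 0" by (meson finite_set_mset prod_zero_iff)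
    moreover have "Ginv \<nu> = 0" using False by (auto simp: Ginv_def)
    ultimately show ?thesis by simp
  qed
qed

definition kk :: "(nat \<times> nat) list \<Rightarrow> nat \<Rightarrow> nat" where "kk LL x = fst (LL ! x)"
definition ll :: "(nat \<times> nat) list \<Rightarrow> nat \<Rightarrow> nat" where "ll LL x = snd (LL ! x)"
definition fib :: "nat \<Rightarrow> (nat \<Rightarrow> nat) \<Rightarrow> nat \<Rightarrow> nat set" where "fib N k m = {x\<in>{..<N}. k x = m}"
definition Kw :: "(nat \<times> nat) list \<Rightarrow> nat set \<Rightarrow> nat" where "Kw LL T = (\<Sum>x\<in>T. kk LL x)"
definition PhiF :: "(nat \<times> nat) list \<Rightarrow> nat \<Rightarrow> nat set \<Rightarrow> nat \<Rightarrow> rat" where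
  "PhiF LL n T a = (\<Prod>x\<in>T \<inter> {x. x < n}. faulhaber (ll LL x) a)"
definition PsiF :: "(nat \<times> nat) list \<Rightarrow> nat \<Rightarrow> nat set \<Rightarrow> nat \<Rightarrow> rat" where
  "PsiF LL n T a = (\<Prod>x\<in>T \<inter> - {x. x < n}. faulhaber (ll LL x) a)"

lemma prod_lessThan_add: "(\<Prod>i<n + m. f i) = (\<Prod>i<n. f i) * (\<Prod>i<m. f (n + i)) " for f :: "nat \<Rightarrow> 'a::comm_monoid_mult"
  by (induction m) (simp_all add: mult.assoc)

lemma MonMon:
  fixes L L' :: "(nat \<times> nat) list"
  assumes p: "is_partition p" and a: "\<alpha> \<subseteq># p" and b: "\<beta> \<subseteq># p"
  defines "LL \<equiv> L @ L'" and "n \<equiv> length L" and "N \<equiv> length (L @ L')"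
  shows "Mon L \<alpha> * Mon L' \<beta> =
    (\<Sum>k\<in>PiE {..<N} (\<lambda>_. set_mset p). \<Prod>m\<in>set_mset p.
        of_nat m ^ Kw LL (fib N k m) * PhiF LL n (fib N k m) (count \<alpha> m) * PsiF LL n (fib N k m) (count \<beta> m))"
proof -
  let ?M = "set_mset p"
  define W where "W x m = of_nat m ^ kk LL x * faulhaber (ll LL x) (count (if x < n then \<alpha> else \<beta>) m)" for x m
  have "Mon L \<alpha> = (\<Prod>i<n. Af (kk LL i) (ll LL i) \<alpha>)"
    unfolding Mon_def prod_list_map_nth n_def LL_def kk_def ll_def
    by (rule prod.cong) (auto simp: nth_append split: prod.splits)
  also have "\<dots> = (\<Prod>i<n. \<Sum>m\<in>?M. W i m)"
    by (rule prod.cong) (auto simp: W_def Af_partition[OF p a])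
  finally have 1: "Mon L \<alpha> = (\<Prod>i<n. \<Sum>m\<in>?M. W i m)" .
  have "Mon L' \<beta> = (\<Prod>i<length L'. Af (kk LL (n + i)) (ll LL (n + i)) \<beta>)"
    unfolding Mon_def prod_list_map_nth n_def LL_def kk_def ll_def
    by (rule prod.cong) (auto simp: nth_append split: prod.splits)
  also have "\<dots> = (\<Prod>i<length L'. \<Sum>m\<in>?M. W (n + i) m)"
    by (rule prod.cong) (auto simp: W_def Af_partition[OF p b])
  finally have 2: "Mon L' \<beta> = (\<Prod>i<length L'. \<Sum>m\<in>?M. W (n + i) m)" .
  have N: "N = n + length L'" by (simp add: N_def n_def)
  have "Mon L \<alpha> * Mon L' \<beta> = (\<Prod>x<N. \<Sum>m\<in>?M. W x m)"
    unfolding 1 2 N prod_lessThan_add ..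
  also have "\<dots> = (\<Sum>k\<in>PiE {..<N} (\<lambda>_. ?M). \<Prod>x<N. W x (k x))"
    by (rule prod_sum_PiE) auto
  also have "\<dots> = (\<Sum>k\<in>PiE {..<N} (\<lambda>_. ?M). \<Prod>m\<in>?M.
        of_nat m ^ Kw LL (fib N k m) * PhiF LL n (fib N k m) (count \<alpha> m) * PsiF LL n (fib N k m) (count \<beta> m))"
  proof (rule sum.cong)
    fix k assume k: "k \<in> PiE {..<N} (\<lambda>_. ?M)"
    have "(\<Prod>x<N. W x (k x)) = (\<Prod>m\<in>?M. \<Prod>x\<in>fib N k m. W x (k x))"
      unfolding fib_def using k by (intro prod.group[symmetric]) auto
    also have "\<dots> = (\<Prod>m\<in>?M.
        of_nat m ^ Kw LL (fib N k m) * PhiF LL n (fib N k m) (count \<alpha> m) * PsiF LL n (fib N k m) (count \<beta> m))"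
    proof (rule prod.cong)
      fix m assume "m \<in> ?M"
      have "(\<Prod>x\<in>fib N k m. W x (k x)) = (\<Prod>x\<in>fib N k m. W x m)"
        by (rule prod.cong) (auto simp: fib_def)
      also have "\<dots> = (\<Prod>x\<in>fib N k m. of_nat m ^ kk LL x) *
          (\<Prod>x\<in>fib N k m. if x < n then faulhaber (ll LL x) (count \<alpha> m) else faulhaber (ll LL x) (count \<beta> m))"
        unfolding W_def prod.distrib by (intro arg_cong2[where f="(*)"] prod.cong) auto
      also have "\<dots> = of_nat m ^ Kw LL (fib N k m) * (PhiF LL n (fib N k m) (count \<alpha> m) * PsiF LL n (fib N k m) (count \<beta> m))"
        unfolding Kw_def PhiF_def PsiF_def by (simp add: power_sum prod.If_cases fib_def)
      finally show "(\<Prod>x\<in>fib N k m. W x (k x)) = of_nat m ^ Kw LL (fib N k m) * PhiF LL n (fib N k m) (count \<alpha> m) * PsiF LL n (fib N k m) (count \<beta> m)"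
        by (simp add: mult.assoc)
    qed simp
    finally show "(\<Prod>x<N. W x (k x)) = (\<Prod>m\<in>?M.
        of_nat m ^ Kw LL (fib N k m) * PhiF LL n (fib N k m) (count \<alpha> m) * PsiF LL n (fib N k m) (count \<beta> m))" .
  qed simp
  finally show ?thesis .
qed

lemma sub_partition: "is_partition p \<Longrightarrow> \<alpha> \<subseteq># p \<Longrightarrow> is_partition \<alpha>"
  unfolding is_partition_def by (meson mset_subset_eqD)

lemma odot_expand:
  fixes L L' :: "(nat \<times> nat) list"
  assumes p: "is_partition p"
  defines "LL \<equiv> L @ L'" and "n \<equiv> length L" and "N \<equiv> length (L @ L')"
  shows "odotF (Mon L) (Mon L') p =
    (\<Sum>k\<in>PiE {..<N} (\<lambda>_. set_mset p). \<Prod>m\<in>set_mset p.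
        of_nat m ^ Kw LL (fib N k m) * chiN (PhiF LL n (fib N k m)) (PsiF LL n (fib N k m)) (count p m))"
proof -
  let ?M = "set_mset p"
  let ?K = "PiE {..<N} (\<lambda>_. ?M)"
  define Y where "Y k m a b = of_nat m ^ Kw LL (fib N k m) * PhiF LL n (fib N k m) a * PsiF LL n (fib N k m) b"
    for k m a b
  have "odotF (Mon L) (Mon L') p =
     (\<Sum>\<rho>\<in>{\<rho>. \<rho> \<subseteq># p}. (\<Sum>\<alpha>\<in>{\<alpha>. \<alpha> \<subseteq># \<rho>}. Mon L \<alpha> * Mon L' (\<rho> - \<alpha>)) * Ginv (p - \<rho>))"
    unfolding odotF_def ser_mult_def[of _ Ginv]
  proof (rule sum.cong[OF refl])
    fix \<rho> assume r: "\<rho> \<in> {\<rho>. \<rho> \<subseteq># p}"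
    have pr: "is_partition \<rho>" using r p sub_partition by auto
    have "(\<Sum>\<alpha>\<in>{\<alpha>. \<alpha> \<subseteq># \<rho>}. gen_series (Mon L) \<alpha> * gen_series (Mon L') (\<rho> - \<alpha>))
       = (\<Sum>\<alpha>\<in>{\<alpha>. \<alpha> \<subseteq># \<rho>}. Mon L \<alpha> * Mon L' (\<rho> - \<alpha>))"
    proof (rule sum.cong[OF refl])
      fix \<alpha> assume a: "\<alpha> \<in> {\<alpha>. \<alpha> \<subseteq># \<rho>}"
      then have "is_partition \<alpha>" "is_partition (\<rho> - \<alpha>)" using pr sub_partition by auto
      then show "gen_series (Mon L) \<alpha> * gen_series (Mon L') (\<rho> - \<alpha>) = Mon L \<alpha> * Mon L' (\<rho> - \<alpha>)"
        by (simp add: gen_series_def)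
    qed
    moreover have "is_partition (p - \<rho>)" using p sub_partition by auto
    ultimately show "SM (gen_series (Mon L)) (gen_series (Mon L')) \<rho> * Ginv (p - \<rho>) =
       (\<Sum>\<alpha>\<in>{\<alpha>. \<alpha> \<subseteq># \<rho>}. Mon L \<alpha> * Mon L' (\<rho> - \<alpha>)) * Ginv (p - \<rho>)"
      by (simp add: ser_mult_def)
  qed
  also have "\<dots> = (\<Sum>\<rho>\<in>{\<rho>. \<rho> \<subseteq># p}. (\<Sum>\<alpha>\<in>{\<alpha>. \<alpha> \<subseteq># \<rho>}. \<Sum>k\<in>?K. \<Prod>m\<in>?M. Y k m (count \<alpha> m) (count \<rho> m - count \<alpha> m))
       * (\<Prod>m\<in>?M. Efn (count p m - count \<rho> m)))"
  proof (intro sum.cong refl arg_cong2[where f="(*)"])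
    fix \<rho> \<alpha> assume r: "\<rho> \<in> {\<rho>. \<rho> \<subseteq># p}" and a: "\<alpha> \<in> {\<alpha>. \<alpha> \<subseteq># \<rho>}"
    have "\<alpha> \<subseteq># p" "\<rho> - \<alpha> \<subseteq># p" using r a by (auto intro: subset_mset.order_trans) (metis diff_subset_eq_self subset_mset.trans)
    then show "Mon L \<alpha> * Mon L' (\<rho> - \<alpha>) = (\<Sum>k\<in>?K. \<Prod>m\<in>?M. Y k m (count \<alpha> m) (count \<rho> m - count \<alpha> m))"
      using MonMon[OF p, of \<alpha> "\<rho> - \<alpha>" L L', folded LL_def n_def N_def] by (simp add: Y_def)
  next
    fix \<rho> assume r: "\<rho> \<in> {\<rho>. \<rho> \<subseteq># p}"
    then show "Ginv (p - \<rho>) = (\<Prod>m\<in>?M. Efn (count p m - count \<rho> m))"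
      by (simp add: Ginv_prod[OF p])
  qed
  also have "\<dots> = (\<Sum>k\<in>?K. \<Sum>\<rho>\<in>{\<rho>. \<rho> \<subseteq># p}.
       (\<Sum>\<alpha>\<in>{\<alpha>. \<alpha> \<subseteq># \<rho>}. \<Prod>m\<in>?M. Y k m (count \<alpha> m) (count \<rho> m - count \<alpha> m))
       * (\<Prod>m\<in>?M. Efn (count p m - count \<rho> m)))"
    by (subst sum.swap) (simp add: sum_distrib_right sum.swap[of _ "{\<alpha>. \<alpha> \<subseteq># _}"])
  also have "\<dots> = (\<Sum>k\<in>?K. \<Sum>\<rho>\<in>{\<rho>. \<rho> \<subseteq># p}. \<Prod>m\<in>?M.
       (\<Sum>a\<le>count \<rho> m. Y k m a (count \<rho> m - a)) * Efn (count p m - count \<rho> m))"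
  proof (intro sum.cong refl)
    fix k \<rho> assume r: "\<rho> \<in> {\<rho>. \<rho> \<subseteq># p}"
    then have "set_mset \<rho> \<subseteq> ?M" by (auto dest: mset_subset_eqD)
    then have "(\<Sum>\<alpha>\<in>{\<alpha>. \<alpha> \<subseteq># \<rho>}. \<Prod>m\<in>?M. Y k m (count \<alpha> m) (count \<rho> m - count \<alpha> m))
        = (\<Prod>m\<in>?M. \<Sum>a\<le>count \<rho> m. Y k m a (count \<rho> m - a))"
      by (intro KL[where G="\<lambda>m a. Y k m a (count \<rho> m - a)"]) auto
    then show "(\<Sum>\<alpha>\<in>{\<alpha>. \<alpha> \<subseteq># \<rho>}. \<Prod>m\<in>?M. Y k m (count \<alpha> m) (count \<rho> m - count \<alpha> m))
       * (\<Prod>m\<in>?M. Efn (count p m - count \<rho> m)) = (\<Prod>m\<in>?M.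
       (\<Sum>a\<le>count \<rho> m. Y k m a (count \<rho> m - a)) * Efn (count p m - count \<rho> m))"
      by (simp add: prod.distrib)
  qed
  also have "\<dots> = (\<Sum>k\<in>?K. \<Prod>m\<in>?M. \<Sum>b\<le>count p m.
       (\<Sum>a\<le>b. Y k m a (b - a)) * Efn (count p m - b))"
  proof (intro sum.cong refl)
    fix k
    show "(\<Sum>\<rho>\<in>{\<rho>. \<rho> \<subseteq># p}. \<Prod>m\<in>?M. (\<Sum>a\<le>count \<rho> m. Y k m a (count \<rho> m - a)) * Efn (count p m - count \<rho> m))
      = (\<Prod>m\<in>?M. \<Sum>b\<le>count p m. (\<Sum>a\<le>b. Y k m a (b - a)) * Efn (count p m - b))"
      by (rule KL[where G="\<lambda>m b. (\<Sum>a\<le>b. Y k m a (b - a)) * Efn (count p m - b)"]) auto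
  qed
  also have "\<dots> = (\<Sum>k\<in>?K. \<Prod>m\<in>?M.
        of_nat m ^ Kw LL (fib N k m) * chiN (PhiF LL n (fib N k m)) (PsiF LL n (fib N k m)) (count p m))"
    unfolding chiN_def Y_def by (simp add: sum_distrib_left sum_distrib_right mult.assoc)
  finally show ?thesis .
qed


definition fibS :: "nat set \<Rightarrow> (nat \<Rightarrow> nat) \<Rightarrow> nat \<Rightarrow> nat set" where
  "fibS S k m = {x\<in>S. k x = m}"

lemma ALG:
  fixes w v :: "nat \<Rightarrow> nat set \<Rightarrow> rat"
  assumes fS: "finite S" and x0: "x0 \<in> S" and fM: "finite M"
  and rec: "\<And>m T. m \<in> M \<Longrightarrow> T \<subseteq> S \<Longrightarrow> x0 \<in> T \<Longrightarrow>
              w m T = (\<Sum>B\<in>{B. x0 \<in> B \<and> B \<subseteq> T}. v m B * w m (T - B))"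
  shows "(\<Sum>k\<in>PiE S (\<lambda>_. M). \<Prod>m\<in>M. w m (fibS S k m)) =
         (\<Sum>B\<in>{B. x0 \<in> B \<and> B \<subseteq> S}. (\<Sum>m\<in>M. v m B) *
             (\<Sum>k\<in>PiE (S - B) (\<lambda>_. M). \<Prod>m\<in>M. w m (fibS (S - B) k m)))"
proof -
  let ?PS = "PiE S (\<lambda>_. M)"
  let ?Bk = "\<lambda>k. {B. x0 \<in> B \<and> B \<subseteq> fibS S k (k x0)}"
  let ?Bs = "{B. x0 \<in> B \<and> B \<subseteq> S}"
  define g where "g = (\<lambda>(k::nat\<Rightarrow>nat, B::nat set). v (k x0) B * (\<Prod>m\<in>M. w m (fibS (S - B) (restrict k (S - B)) m)))"
  have fPow: "finite {B. x0 \<in> B \<and> B \<subseteq> T}" if "T \<subseteq> S" for T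
    using fS that by (metis (no_types, lifting) Collect_mono Pow_def finite_Pow_iff finite_subset)
  have step: "(\<Prod>m\<in>M. w m (fibS S k m)) = (\<Sum>B\<in>?Bk k. g (k, B))" if k: "k \<in> ?PS" for k
  proof -
    let ?m0 = "k x0"
    have m0: "?m0 \<in> M" using k x0 by auto
    have "(\<Prod>m\<in>M. w m (fibS S k m)) = w ?m0 (fibS S k ?m0) * (\<Prod>m\<in>M - {?m0}. w m (fibS S k m))"
      using fM m0 by (simp add: prod.remove)
    also have "w ?m0 (fibS S k ?m0) = (\<Sum>B\<in>?Bk k. v ?m0 B * w ?m0 (fibS S k ?m0 - B))"
      using rec[OF m0, of "fibS S k ?m0"] x0 by (auto simp: fibS_def)
    also have "(\<Sum>B\<in>?Bk k. v ?m0 B * w ?m0 (fibS S k ?m0 - B)) * (\<Prod>m\<in>M - {?m0}. w m (fibS S k m))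
        = (\<Sum>B\<in>?Bk k. g (k, B))"
      unfolding sum_distrib_right
    proof (rule sum.cong[OF refl])
      fix B assume B: "B \<in> ?Bk k"
      have fe: "fibS (S - B) (restrict k (S - B)) m = (if m = ?m0 then fibS S k ?m0 - B else fibS S k m)" for m
        using B by (auto simp: fibS_def)
      have "(\<Prod>m\<in>M. w m (fibS (S - B) (restrict k (S - B)) m)) =
            w ?m0 (fibS S k ?m0 - B) * (\<Prod>m\<in>M - {?m0}. w m (fibS (S - B) (restrict k (S - B)) m))"
        using fM m0 by (simp add: prod.remove fe)
      also have "(\<Prod>m\<in>M - {?m0}. w m (fibS (S - B) (restrict k (S - B)) m)) = (\<Prod>m\<in>M - {?m0}. w m (fibS S k m))"
        by (rule prod.cong) (auto simp: fe)
      finally have eq: "(\<Prod>m\<in>M. w m (fibS (S - B) (restrict k (S - B)) m)) =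
            w ?m0 (fibS S k ?m0 - B) * (\<Prod>m\<in>M - {?m0}. w m (fibS S k m))" .
      show "v ?m0 B * w ?m0 (fibS S k ?m0 - B) * (\<Prod>m\<in>M - {?m0}. w m (fibS S k m)) = g (k, B)"
        unfolding g_def prod.case eq by (simp only: mult.assoc)
    qed
    finally show ?thesis .
  qed
  have "(\<Sum>k\<in>?PS. \<Prod>m\<in>M. w m (fibS S k m)) = (\<Sum>k\<in>?PS. \<Sum>B\<in>?Bk k. g (k, B))"
    by (rule sum.cong[OF refl]) (rule step)
  also have "\<dots> = (\<Sum>(k,B)\<in>Sigma ?PS ?Bk. g (k,B))"
    by (rule sum.Sigma) (auto intro!: finite_PiE fS fM fPow simp: fibS_def)
  also have "\<dots> = (\<Sum>(B,mk)\<in>Sigma ?Bs (\<lambda>B. M \<times> PiE (S - B) (\<lambda>_. M)).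
                    v (fst mk) B * (\<Prod>m\<in>M. w m (fibS (S - B) (snd mk) m)))"
  proof (rule sum.reindex_bij_witness[of _
        "\<lambda>(B, mk). ((\<lambda>x. if x \<in> B then fst mk else snd mk x), B)"
        "\<lambda>(k, B). (B, (k x0, restrict k (S - B)))"])
    fix a assume a: "a \<in> Sigma ?PS ?Bk"
    then obtain k B where kB: "a = (k, B)" "k \<in> ?PS" "B \<in> ?Bk k" by auto
    have eqk: "(\<lambda>x. if x \<in> B then k x0 else restrict k (S - B) x) = k"
    proof
      fix x show "(if x \<in> B then k x0 else restrict k (S - B) x) = k x"
        using kB by (auto simp: fibS_def PiE_def extensional_def)
    qed
    then show "(case case a of (k, B) \<Rightarrow> (B, k x0, restrict k (S - B)) of
          (B, mk) \<Rightarrow> (\<lambda>x. if x \<in> B then fst mk else snd mk x, B)) = a"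
      by (simp only: kB(1) prod.case fst_conv snd_conv eqk)
    show "(case a of (k, B) \<Rightarrow> (B, k x0, restrict k (S - B))) \<in> Sigma ?Bs (\<lambda>B. M \<times> PiE (S - B) (\<lambda>_. M))"
      using kB x0 by (auto simp: fibS_def)
    show "(case case a of (k, B) \<Rightarrow> (B, k x0, restrict k (S - B)) of
          (B, mk) \<Rightarrow> v (fst mk) B * (\<Prod>m\<in>M. w m (fibS (S - B) (snd mk) m))) = (case a of (k, B) \<Rightarrow> g (k, B))"
      using kB by (simp add: g_def)
  next
    fix b assume b: "b \<in> Sigma ?Bs (\<lambda>B. M \<times> PiE (S - B) (\<lambda>_. M))"
    then obtain B m k' where bB: "b = (B, (m, k'))" "B \<in> ?Bs" "m \<in> M" "k' \<in> PiE (S - B) (\<lambda>_. M)" by auto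
    have r: "restrict (\<lambda>x. if x \<in> B then m else k' x) (S - B) = k'"
      using bB by (auto simp: PiE_def extensional_def restrict_def)
    show "(case case b of (B, mk) \<Rightarrow> (\<lambda>x. if x \<in> B then fst mk else snd mk x, B) of
          (k, B) \<Rightarrow> (B, k x0, restrict k (S - B))) = b"
      using bB(2) by (simp only: bB(1) prod.case fst_conv snd_conv r) simp
    show "(case b of (B, mk) \<Rightarrow> (\<lambda>x. if x \<in> B then fst mk else snd mk x, B)) \<in> Sigma ?PS ?Bk"
      using bB by (auto simp: fibS_def PiE_def extensional_def)
  qed
  also have "\<dots> = (\<Sum>B\<in>?Bs. \<Sum>mk\<in>M \<times> PiE (S - B) (\<lambda>_. M). v (fst mk) B * (\<Prod>m\<in>M. w m (fibS (S - B) (snd mk) m)))"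
    by (rule sum.Sigma[symmetric]) (auto intro!: finite_PiE fS fM fPow)
  also have "\<dots> = (\<Sum>B\<in>?Bs. (\<Sum>m\<in>M. v m B) * (\<Sum>k\<in>PiE (S - B) (\<lambda>_. M). \<Prod>m\<in>M. w m (fibS (S - B) k m)))"
  proof (rule sum.cong[OF refl])
    fix B
    show "(\<Sum>mk\<in>M \<times> PiE (S - B) (\<lambda>_. M). v (fst mk) B * (\<Prod>m\<in>M. w m (fibS (S - B) (snd mk) m))) =
          (\<Sum>m\<in>M. v m B) * (\<Sum>k\<in>PiE (S - B) (\<lambda>_. M). \<Prod>m\<in>M. w m (fibS (S - B) k m))"
    proof -
      have "(\<Sum>mk\<in>M \<times> PiE (S - B) (\<lambda>_. M). v (fst mk) B * (\<Prod>m\<in>M. w m (fibS (S - B) (snd mk) m))) =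
            (\<Sum>m\<in>M. \<Sum>k\<in>PiE (S - B) (\<lambda>_. M). v m B * (\<Prod>m\<in>M. w m (fibS (S - B) k m)))"
        by (simp add: sum.cartesian_product split_def)
      also have "\<dots> = (\<Sum>m\<in>M. v m B) * (\<Sum>k\<in>PiE (S - B) (\<lambda>_. M). \<Prod>m\<in>M. w m (fibS (S - B) k m))"
        by (simp add: sum_distrib_left sum_distrib_right) (rule sum.swap)
      finally show ?thesis .
    qed
  qed
  finally show ?thesis .
qed


definition ssum :: "(int \<Rightarrow> rat) \<Rightarrow> int \<Rightarrow> rat" where
  "ssum g n = (if 0 \<le> n then (\<Sum>a\<in>{0..n}. g a) else - (\<Sum>a\<in>{n+1..-1}. g a))"

lemma ssum_m1[simp]: "ssum g (-1) = 0"
  by (simp add: ssum_def)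

lemma ssum_step: "ssum g n - ssum g (n - 1) = g n"
proof (cases "1 \<le> n")
  case True
  have "{0..n} = insert n {0..n-1}" using True by auto
  then show ?thesis using True by (simp add: ssum_def)
next
  case False
  show ?thesis
  proof (cases "n = 0")
    case True then show ?thesis by (simp add: ssum_def)
  next
    case False
    then have n: "n \<le> -1" using \<open>\<not> 1 \<le> n\<close> by auto
    have "{n..-1} = insert n {n+1..-1}" using n by auto
    then show ?thesis using n by (simp add: ssum_def)
  qed
qed

lemma ssum_unique:
  assumes "\<And>n. S n - S (n - 1) = g n" and "S (-1) = 0"
  shows "S n = ssum g n"
proof -
  define D where "D n = S n - ssum g n" for n
  have D: "D n = D (n - 1)" for n using assms(1)[of n] ssum_step[of g n] by (simp add: D_def)
  have "D n = 0"
  proof (induction n rule: int_induct[where k="-1"])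
    case base then show ?case using assms(2) by (simp add: D_def)
  next
    case (step1 i) then show ?case using D[of "i+1"] by simp
  next
    case (step2 i) then show ?case using D[of i] by simp
  qed
  then show ?thesis by (simp add: D_def)
qed

lemma ssum_add: "ssum (\<lambda>a. f a + g a) n = ssum f n + ssum g n"
  by (simp add: ssum_def sum.distrib)
lemma ssum_cmult: "ssum (\<lambda>a. c * f a) n = c * ssum f n"
  by (simp add: ssum_def sum_distrib_left)
lemma ssum_sum: "finite I \<Longrightarrow> ssum (\<lambda>a. \<Sum>i\<in>I. F i a) n = (\<Sum>i\<in>I. ssum (F i) n)"
  by (induction I rule: finite_induct) (simp_all add: ssum_add, simp add: ssum_def)
lemma ssum_nat: "ssum g (int c) = (\<Sum>a\<le>c. g (int a))"
proof -
  have "(\<Sum>a\<in>{0..int c}. g a) = (\<Sum>a\<in>int ` {..c}. g a)"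
    by (rule sum.cong) (auto simp: image_iff intro!: bexI[where x="nat _"])
  also have "\<dots> = (\<Sum>a\<le>c. g (int a))" by (simp add: sum.reindex)
  finally show ?thesis by (simp add: ssum_def)
qed

definition ispoly :: "(int \<Rightarrow> rat) \<Rightarrow> bool" where
  "ispoly f \<longleftrightarrow> (\<exists>p. \<forall>n. f n = poly p (of_int n))"

lemma ispoly_const: "ispoly (\<lambda>_. c)"
  unfolding ispoly_def by (rule exI[of _ "[:c:]"]) simp
lemma ispoly_id: "ispoly (\<lambda>n. of_int n)"
  unfolding ispoly_def by (rule exI[of _ "[:0,1:]"]) simp
lemma ispoly_add: "ispoly f \<Longrightarrow> ispoly g \<Longrightarrow> ispoly (\<lambda>n. f n + g n)"
  unfolding ispoly_def by (metis poly_add)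
lemma ispoly_diff: "ispoly f \<Longrightarrow> ispoly g \<Longrightarrow> ispoly (\<lambda>n. f n - g n)"
  unfolding ispoly_def by (metis poly_diff)
lemma ispoly_mult: "ispoly f \<Longrightarrow> ispoly g \<Longrightarrow> ispoly (\<lambda>n. f n * g n)"
  unfolding ispoly_def by (metis poly_mult)
lemma ispoly_power: "ispoly f \<Longrightarrow> ispoly (\<lambda>n. f n ^ j)"
  by (induction j) (simp_all add: ispoly_const ispoly_mult)
lemma ispoly_sum: "finite I \<Longrightarrow> (\<And>i. i \<in> I \<Longrightarrow> ispoly (F i)) \<Longrightarrow> ispoly (\<lambda>n. \<Sum>i\<in>I. F i n)"
  by (induction I rule: finite_induct) (simp_all add: ispoly_const ispoly_add)
lemma ispoly_prod: "finite I \<Longrightarrow> (\<And>i. i \<in> I \<Longrightarrow> ispoly (F i)) \<Longrightarrow> ispoly (\<lambda>n. \<Prod>i\<in>I. F i n)"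
  by (induction I rule: finite_induct) (simp_all add: ispoly_const ispoly_mult)
lemma ispoly_shift: "ispoly f \<Longrightarrow> ispoly (\<lambda>n. f (n - 1))"
proof -
  assume "ispoly f"
  then obtain p where p: "\<And>n. f n = poly p (of_int n)" unfolding ispoly_def by blast
  show ?thesis unfolding ispoly_def
    by (rule exI[of _ "pcompose p [:-1,1:]"]) (simp add: p poly_pcompose)
qed

lemma faul_mono: "\<exists>q::rat poly. \<forall>x. poly q x - poly q (x - 1) = x ^ d"
proof (induction d rule: less_induct)
  case (less d)
  then have "\<forall>j\<in>{..<d}. \<exists>q::rat poly. \<forall>x. poly q x - poly q (x - 1) = x ^ j" by blast
  then obtain Q :: "nat \<Rightarrow> rat poly" where Q0: "\<forall>j\<in>{..<d}. \<forall>x. poly (Q j) x - poly (Q j) (x - 1) = x ^ j"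
    by (metis bchoice)
  then have Q: "\<And>j x. j < d \<Longrightarrow> poly (Q j) x - poly (Q j) (x - 1) = x ^ j" by blast
  define c where "c j = of_nat ((d+1) choose j) * (-1::rat) ^ (d - j)" for j
  define q where "q = smult (1 / of_nat (d+1)) (monom 1 (d+1) - (\<Sum>j<d. smult (c j) (Q j)))"
  have bin: "x ^ (d+1) - (x - 1) ^ (d+1) = (\<Sum>j\<le>d. c j * x ^ j)" for x :: rat
  proof -
    have "(x - 1) ^ (d+1) = (x + (-1)) ^ (d+1)" by simp
    also have "\<dots> = (\<Sum>j\<le>d+1. of_nat ((d+1) choose j) * x ^ j * (-1) ^ (d + 1 - j))"
      by (rule binomial_ring)
    also have "\<dots> = x ^ (d+1) + (\<Sum>j\<le>d. of_nat ((d+1) choose j) * x ^ j * (-1) ^ (d + 1 - j))"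
      by (simp add: add.commute)
    also have "(\<Sum>j\<le>d. of_nat ((d+1) choose j) * x ^ j * (-1) ^ (d + 1 - j)) = - (\<Sum>j\<le>d. c j * x ^ j)"
      unfolding sum_negf[symmetric]
    proof (rule sum.cong[OF refl])
      fix j assume "j \<in> {..d}"
      then have "d + 1 - j = Suc (d - j)" by auto
      then show "of_nat ((d+1) choose j) * x ^ j * (-1) ^ (d + 1 - j) = - (c j * x ^ j)"
        by (simp add: c_def)
    qed
    finally show ?thesis by simp
  qed
  have pq: "poly q y = (1 / of_nat (d+1)) * (y ^ (d+1) - (\<Sum>j<d. c j * poly (Q j) y))" for y
    by (simp add: q_def poly_monom poly_sum)
  have "poly q x - poly q (x - 1) = x ^ d" for x
  proof -
    have e: "(\<Sum>j<d. c j * poly (Q j) x) - (\<Sum>j<d. c j * poly (Q j) (x - 1)) =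
          (\<Sum>j<d. c j * (poly (Q j) x - poly (Q j) (x - 1)))"
      by (simp add: sum_subtractf right_diff_distrib)
    have "poly q x - poly q (x - 1) = (1 / of_nat (d+1)) *
        ((x ^ (d+1) - (x - 1) ^ (d+1)) - ((\<Sum>j<d. c j * poly (Q j) x) - (\<Sum>j<d. c j * poly (Q j) (x - 1))))"
      unfolding pq by (simp add: algebra_simps)
    also have "\<dots> = (1 / of_nat (d+1)) *
        ((x ^ (d+1) - (x - 1) ^ (d+1)) - (\<Sum>j<d. c j * (poly (Q j) x - poly (Q j) (x - 1))))"
      unfolding e ..
    also have "(\<Sum>j<d. c j * (poly (Q j) x - poly (Q j) (x - 1))) = (\<Sum>j<d. c j * x ^ j)"
      by (rule sum.cong) (auto simp: Q)
    also have "x ^ (d+1) - (x - 1) ^ (d+1) = c d * x ^ d + (\<Sum>j<d. c j * x ^ j)"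
      unfolding bin by (simp add: lessThan_Suc_atMost[symmetric])
    also have "c d = of_nat (d+1)" by (simp add: c_def)
    finally show ?thesis by simp
  qed
  then show ?case by blast
qed

lemma faul_poly: "\<exists>q::rat poly. \<forall>x. poly q x - poly q (x - 1) = poly p x"
proof -
  have "\<forall>j\<in>{..degree p}. \<exists>q::rat poly. \<forall>x. poly q x - poly q (x - 1) = x ^ j"
    using faul_mono by blast
  then obtain Q :: "nat \<Rightarrow> rat poly" where Q0: "\<forall>j\<in>{..degree p}. \<forall>x. poly (Q j) x - poly (Q j) (x - 1) = x ^ j"
    by (metis bchoice)
  then have Q: "\<And>j x. j \<le> degree p \<Longrightarrow> poly (Q j) x - poly (Q j) (x - 1) = x ^ j" by blast
  define q where "q = (\<Sum>j\<le>degree p. smult (coeff p j) (Q j))"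
  have "poly q x - poly q (x - 1) = poly p x" for x
  proof -
    have "poly q x - poly q (x - 1) = (\<Sum>j\<le>degree p. coeff p j * (poly (Q j) x - poly (Q j) (x - 1)))"
      by (simp add: q_def poly_sum sum_subtractf right_diff_distrib)
    also have "\<dots> = (\<Sum>j\<le>degree p. coeff p j * x ^ j)" by (rule sum.cong) (auto simp: Q)
    finally show ?thesis by (simp add: poly_altdef)
  qed
  then show ?thesis by blast
qed

lemma ispoly_ssum: "ispoly g \<Longrightarrow> ispoly (ssum g)"
proof -
  assume "ispoly g"
  then obtain p where p: "\<And>n. g n = poly p (of_int n)" unfolding ispoly_def by blast
  obtain q where q: "\<And>x. poly q x - poly q (x - 1) = poly p x" using faul_poly by blast
  define S where "S n = poly q (of_int n) - poly q (-1)" for n :: int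
  have "S n = ssum g n" for n
    by (rule ssum_unique) (auto simp: S_def p q[symmetric])
  then have "ssum g = S" by auto
  moreover have "ispoly S" unfolding S_def ispoly_def
    by (rule exI[of _ "q - [:poly q (-1):]"]) simp
  ultimately show ?thesis by simp
qed

lemma const_int: "(\<And>n. D n = D (n - 1)) \<Longrightarrow> D (n::int) = D 0"
proof (induction n rule: int_induct[where k=0])
  case base then show ?case by simp
next
  case (step1 i) then show ?case by (metis add_diff_cancel_right')
next
  case (step2 i) then show ?case by metis
qed

definition Fz :: "nat \<Rightarrow> int \<Rightarrow> rat" where
  "Fz l n = ssum (\<lambda>i. of_int i ^ (l - 1)) n - 0 ^ (l - 1)"

lemma Fz_step: "Fz l n - Fz l (n - 1) = of_int n ^ (l - 1)"
  using ssum_step[of "\<lambda>i. of_int i ^ (l - 1)" n] by (simp add: Fz_def)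

lemma Fz_0[simp]: "Fz l 0 = 0"
  by (simp add: Fz_def ssum_def)

lemma Fz_nat: "Fz l (int c) = faulhaber l c"
proof -
  have "(\<Sum>a\<le>c. (of_nat a::rat) ^ (l - 1)) = 0 ^ (l - 1) + (\<Sum>a\<in>{1..c}. of_nat a ^ (l - 1))"
  proof -
    have "{..c} = insert 0 {1..c}" by auto
    then show ?thesis by simp
  qed
  then show ?thesis by (simp add: Fz_def ssum_nat faulhaber_def)
qed

lemma ispoly_Fz: "ispoly (Fz l)"
proof -
  have "ispoly (\<lambda>n. ssum (\<lambda>i. of_int i ^ (l - 1)) n - 0 ^ (l - 1))"
    by (intro ispoly_diff ispoly_ssum ispoly_power ispoly_id ispoly_const)
  then show ?thesis by (simp add: Fz_def[abs_def])
qed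

lemma Fz_refl:
  assumes "1 \<le> l"
  shows "Fz l (-1 - r) = (-1) ^ l * Fz l r + (if l = 1 then -1 else 0)"
proof -
  obtain j where l: "l = Suc j" using assms by (cases l) auto
  define H where "H r = Fz l (-1 - r) - (-1) ^ l * Fz l r" for r
  have "H n = H (n - 1)" for n
  proof -
    have e1: "Fz l (-1 - n) = Fz l (-n - 1)" by (rule arg_cong[where f="Fz l"]) simp
    have e2: "Fz l (-1 - (n - 1)) = Fz l (-n)" by (rule arg_cong[where f="Fz l"]) simp
    have a: "Fz l (-n) - Fz l (-n - 1) = of_int (- n) ^ j" using Fz_step[of l "-n"] l by simp
    have b: "Fz l n - Fz l (n - 1) = of_int n ^ j" using Fz_step[of l n] l by simp
    have c: "(of_int (- n)::rat) ^ j = (-1) ^ j * of_int n ^ j"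
      by (simp add: power_mult_distrib[symmetric])
    have a': "Fz l (-1 - n) - Fz l (-1 - (n - 1)) = - (of_int (-n) ^ j)"
      using a unfolding e1 e2 by simp
    have "H n - H (n - 1) = (Fz l (-1 - n) - Fz l (-1 - (n - 1))) - (-1) ^ l * (Fz l n - Fz l (n - 1))"
      unfolding H_def by (simp add: algebra_simps)
    also have "\<dots> = - (of_int (-n) ^ j) - (-1) ^ l * of_int n ^ j" by (simp only: a' b)
    also have "\<dots> = 0" by (simp add: l) (simp add: power_mult_distrib[symmetric])
    finally show ?thesis by simp
  qed
  then have "H r = H 0" by (rule const_int)
  moreover have "H 0 = (if l = 1 then -1 else 0)"
    using l by (simp add: H_def Fz_def ssum_def)
  ultimately show ?thesis by (simp add: H_def algebra_simps)
qed

definition Fh :: "nat \<Rightarrow> int \<Rightarrow> rat" where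
  "Fh l r = Fz l r + (if l = 1 then 1/2 else 0)"

lemma Fh_refl: "1 \<le> l \<Longrightarrow> Fh l (-1 - r) = (-1) ^ l * Fh l r"
  by (simp add: Fh_def Fz_refl)

definition Cz :: "(int \<Rightarrow> rat) \<Rightarrow> (int \<Rightarrow> rat) \<Rightarrow> int \<Rightarrow> rat" where
  "Cz \<phi> \<psi> n = ssum (\<lambda>a. \<phi> a * \<psi> (n - a)) n"
definition odotZ :: "(int \<Rightarrow> rat) \<Rightarrow> (int \<Rightarrow> rat) \<Rightarrow> int \<Rightarrow> rat" where
  "odotZ \<phi> \<psi> n = Cz \<phi> \<psi> n - Cz \<phi> \<psi> (n - 1)"

lemma Cz_refl_pos:
  assumes p1: "\<And>x. \<phi> (-1 - x) = s1 * \<phi> x" and p2: "\<And>x. \<psi> (-1 - x) = s2 * \<psi> x" and n: "0 \<le> n"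
  shows "Cz \<phi> \<psi> (-2 - n) = - (s1 * s2) * Cz \<phi> \<psi> n"
proof -
  have "Cz \<phi> \<psi> (-2 - n) = - (\<Sum>a\<in>{-1-n..-1}. \<phi> a * \<psi> (-2 - n - a))"
    using n by (simp add: Cz_def ssum_def)
  also have "(\<Sum>a\<in>{-1-n..-1}. \<phi> a * \<psi> (-2 - n - a)) = (\<Sum>b\<in>{0..n}. \<phi> (-1 - b) * \<psi> (-2 - n - (-1 - b)))"
    by (rule sum.reindex_bij_witness[of _ "\<lambda>b. -1 - b" "\<lambda>a. -1 - a"]) auto
  also have "\<dots> = (\<Sum>b\<in>{0..n}. (s1 * s2) * (\<phi> b * \<psi> (n - b)))"
  proof (rule sum.cong[OF refl])
    fix b
    have e: "-2 - n - (-1 - b) = -1 - (n - b)" by simp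
    show "\<phi> (-1 - b) * \<psi> (-2 - n - (-1 - b)) = (s1 * s2) * (\<phi> b * \<psi> (n - b))"
      by (simp only: e p1 p2) (simp add: algebra_simps)
  qed
  also have "\<dots> = (s1 * s2) * Cz \<phi> \<psi> n"
    using n by (simp add: Cz_def ssum_def sum_distrib_left)
  finally show ?thesis by simp
qed

lemma Cz_refl:
  assumes p1: "\<And>x. \<phi> (-1 - x) = s1 * \<phi> x" and p2: "\<And>x. \<psi> (-1 - x) = s2 * \<psi> x"
    and s: "(s1 * s2) * (s1 * s2) = 1"
  shows "Cz \<phi> \<psi> (-2 - n) = - (s1 * s2) * Cz \<phi> \<psi> n"
proof -
  consider "0 \<le> n" | "n = -1" | "n \<le> -2" by linarith
  then show ?thesis
  proof cases
    case 1 then show ?thesis by (rule Cz_refl_pos[of \<phi> s1 \<psi> s2, OF p1 p2])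
  next
    case 2 then show ?thesis by (simp add: Cz_def)
  next
    case 3
    have "Cz \<phi> \<psi> (-2 - (-2 - n)) = - (s1 * s2) * Cz \<phi> \<psi> (-2 - n)"
      using 3 by (intro Cz_refl_pos[of \<phi> s1 \<psi> s2, OF p1 p2]) simp
    then have "Cz \<phi> \<psi> n = - (s1 * s2) * Cz \<phi> \<psi> (-2 - n)" by simp
    then have "(s1 * s2) * Cz \<phi> \<psi> n = - ((s1 * s2) * (s1 * s2)) * Cz \<phi> \<psi> (-2 - n)" by simp
    then show ?thesis using s by (simp add: algebra_simps)
  qed
qed

lemma odotZ_refl:
  assumes p1: "\<And>x. \<phi> (-1 - x) = s1 * \<phi> x" and p2: "\<And>x. \<psi> (-1 - x) = s2 * \<psi> x"
    and s: "(s1 * s2) * (s1 * s2) = 1"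
  shows "odotZ \<phi> \<psi> (-1 - n) = (s1 * s2) * odotZ \<phi> \<psi> n"
proof -
  have a: "Cz \<phi> \<psi> (-1 - n) = - (s1 * s2) * Cz \<phi> \<psi> (n - 1)"
    using Cz_refl[of \<phi> s1 \<psi> s2, OF p1 p2 s, of "n - 1"] by simp
  have "Cz \<phi> \<psi> (-1 - n - 1) = Cz \<phi> \<psi> (-2 - n)" by (rule arg_cong[where f="Cz \<phi> \<psi>"]) simp
  then have b: "Cz \<phi> \<psi> (-1 - n - 1) = - (s1 * s2) * Cz \<phi> \<psi> n"
    using Cz_refl[of \<phi> s1 \<psi> s2, OF p1 p2 s, of n] by simp
  show ?thesis unfolding odotZ_def a b by (simp add: algebra_simps)
qed

lemma odotZ_add_left: "odotZ (\<lambda>a. \<phi> a + c * \<phi>' a) \<psi> n = odotZ \<phi> \<psi> n + c * odotZ \<phi>' \<psi> n"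
proof -
  have e: "(\<phi> a + c * \<phi>' a) * \<psi> b = \<phi> a * \<psi> b + c * (\<phi>' a * \<psi> b)" for a b
    by (simp add: algebra_simps)
  show ?thesis by (simp only: odotZ_def Cz_def e ssum_add ssum_cmult) (simp add: algebra_simps)
qed
lemma odotZ_add_right: "odotZ \<psi> (\<lambda>a. \<phi> a + c * \<phi>' a) n = odotZ \<psi> \<phi> n + c * odotZ \<psi> \<phi>' n"
proof -
  have e: "\<psi> a * (\<phi> b + c * \<phi>' b) = \<psi> a * \<phi> b + c * (\<psi> a * \<phi>' b)" for a b
    by (simp add: algebra_simps)
  show ?thesis by (simp only: odotZ_def Cz_def e ssum_add ssum_cmult) (simp add: algebra_simps)
qed

lemma odotZ_one_right: "odotZ \<phi> (\<lambda>_. 1) n = \<phi> n"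
  by (simp add: odotZ_def Cz_def ssum_step)

lemma Cz_one_left: "Cz (\<lambda>_. 1) \<psi> n = ssum \<psi> n"
proof (cases "0 \<le> n")
  case True
  have "(\<Sum>a\<in>{0..n}. \<psi> (n - a)) = (\<Sum>a\<in>{0..n}. \<psi> a)"
    by (rule sum.reindex_bij_witness[of _ "\<lambda>a. n - a" "\<lambda>a. n - a"]) auto
  then show ?thesis using True by (simp add: Cz_def ssum_def)
next
  case False
  have "(\<Sum>a\<in>{n+1..-1}. \<psi> (n - a)) = (\<Sum>a\<in>{n+1..-1}. \<psi> a)"
    by (rule sum.reindex_bij_witness[of _ "\<lambda>a. n - a" "\<lambda>a. n - a"]) auto
  then show ?thesis using False by (simp add: Cz_def ssum_def)
qed

lemma odotZ_one_left: "odotZ (\<lambda>_. 1) \<psi> n = \<psi> n"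
  by (simp add: odotZ_def Cz_one_left ssum_step)

lemma poly_diff_expand:
  "poly p (x - y) = (\<Sum>j\<le>degree p. \<Sum>t\<le>j. (coeff p j * of_nat (j choose t)) * x ^ t * (- y) ^ (j - t))"
  for x y :: rat
proof -
  have "poly p (x - y) = (\<Sum>j\<le>degree p. coeff p j * (x + (- y)) ^ j)" by (simp add: poly_altdef)
  also have "\<dots> = (\<Sum>j\<le>degree p. \<Sum>t\<le>j. (coeff p j * of_nat (j choose t)) * x ^ t * (- y) ^ (j - t))"
    by (simp only: binomial_ring) (simp add: sum_distrib_left mult.assoc)
  finally show ?thesis .
qed

lemma ispoly_Cz:
  assumes "ispoly \<phi>" "ispoly \<psi>"
  shows "ispoly (Cz \<phi> \<psi>)"
proof -
  obtain p where p: "\<And>n. \<psi> n = poly p (of_int n)" using assms(2) unfolding ispoly_def by blast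
  define c where "c j t = coeff p j * of_nat (j choose t)" for j t
  have "Cz \<phi> \<psi> n = (\<Sum>j\<le>degree p. \<Sum>t\<le>j. c j t * of_int n ^ t * ssum (\<lambda>a. \<phi> a * (- of_int a) ^ (j - t)) n)" for n
  proof -
    have "Cz \<phi> \<psi> n = ssum (\<lambda>a. \<Sum>j\<le>degree p. \<Sum>t\<le>j. (c j t * of_int n ^ t) * (\<phi> a * (- of_int a) ^ (j - t))) n"
      unfolding Cz_def p of_int_diff poly_diff_expand c_def
      by (simp add: sum_distrib_left algebra_simps)
    also have "\<dots> = (\<Sum>j\<le>degree p. \<Sum>t\<le>j. (c j t * of_int n ^ t) * ssum (\<lambda>a. \<phi> a * (- of_int a) ^ (j - t)) n)"
      by (simp add: ssum_sum ssum_cmult)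
    finally show ?thesis by (simp add: mult.assoc)
  qed
  then have e: "Cz \<phi> \<psi> = (\<lambda>n. \<Sum>j\<le>degree p. \<Sum>t\<le>j. c j t * of_int n ^ t * ssum (\<lambda>a. \<phi> a * (- of_int a) ^ (j - t)) n)"
    by auto
  show ?thesis unfolding e
    by (intro ispoly_sum ispoly_mult ispoly_const ispoly_power ispoly_id ispoly_ssum assms(1)
        ispoly_diff[of "\<lambda>_. 0", simplified]) auto
qed

lemma ispoly_odotZ: "ispoly \<phi> \<Longrightarrow> ispoly \<psi> \<Longrightarrow> ispoly (odotZ \<phi> \<psi>)"
  unfolding odotZ_def[abs_def] by (intro ispoly_diff ispoly_shift ispoly_Cz)

lemma chiN_odotZ: "chiN (\<lambda>a. \<phi> (int a)) (\<lambda>b. \<psi> (int b)) c = odotZ \<phi> \<psi> (int c)"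
proof -
  define D where "D b = (\<Sum>a\<le>b. \<phi> (int a) * \<psi> (int (b - a)))" for b
  have D: "D b = Cz \<phi> \<psi> (int b)" for b
    unfolding D_def Cz_def ssum_nat by (rule sum.cong) (auto simp: of_nat_diff)
  have "chiN (\<lambda>a. \<phi> (int a)) (\<lambda>b. \<psi> (int b)) c = (\<Sum>b\<le>c. D b * Efn (c - b))"
    by (simp add: chiN_def D_def)
  also have "\<dots> = D c - (if c = 0 then 0 else D (c - 1))"
  proof (cases c)
    case 0 then show ?thesis by (simp add: Efn_def)
  next
    case (Suc c')
    have "(\<Sum>b\<le>c'. D b * Efn (Suc c' - b)) = - D c'"
    proof (cases c')
      case 0 then show ?thesis by (simp add: Efn_def)
    next
      case (Suc c'')
      have "(\<Sum>b\<le>c''. D b * Efn (Suc (Suc c'') - b)) = 0"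
        by (rule sum.neutral) (auto simp: Efn_def)
      then show ?thesis using Suc by (simp add: Efn_def)
    qed
    then show ?thesis using Suc by (simp add: Efn_def)
  qed
  also have "\<dots> = odotZ \<phi> \<psi> (int c)"
    by (cases c) (auto simp: odotZ_def D Cz_def)
  finally show ?thesis .
qed


function kap :: "(nat set \<Rightarrow> int \<Rightarrow> rat) \<Rightarrow> nat set \<Rightarrow> int \<Rightarrow> rat" where
  "kap q S r = (if S = {} \<or> infinite S then 0 else
      q S r - (\<Sum>B\<in>{B. Min S \<in> B \<and> B \<subset> S}. kap q B r * q (S - B) r))"
  by pat_completeness auto
termination by (relation "measure (\<lambda>(q,S,r). card S)") (auto simp: psubset_card_mono)

declare kap.simps[simp del]

lemma finite_PB: "finite T \<Longrightarrow> finite {B. P B \<and> B \<subseteq> T}"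
  by (rule finite_subset[of _ "Pow T"]) auto
lemma finite_PB': "finite T \<Longrightarrow> finite {B. P B \<and> B \<subset> T}"
  by (rule finite_subset[of _ "Pow T"]) auto

lemma kap_empty[simp]: "kap q {} r = 0"
  by (simp add: kap.simps)

lemma kap_unfold: "finite S \<Longrightarrow> S \<noteq> {} \<Longrightarrow>
   kap q S r = q S r - (\<Sum>B\<in>{B. Min S \<in> B \<and> B \<subset> S}. kap q B r * q (S - B) r)"
  by (simp add: kap.simps)

lemma kap_rec:
  assumes "finite T" "T \<noteq> {}" "q {} r = 1"
  shows "q T r = (\<Sum>B\<in>{B. Min T \<in> B \<and> B \<subseteq> T}. kap q B r * q (T - B) r)"
proof -
  have "{B. Min T \<in> B \<and> B \<subseteq> T} = insert T {B. Min T \<in> B \<and> B \<subset> T}"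
    using assms Min_in by auto
  then have "(\<Sum>B\<in>{B. Min T \<in> B \<and> B \<subseteq> T}. kap q B r * q (T - B) r) =
      kap q T r * q {} r + (\<Sum>B\<in>{B. Min T \<in> B \<and> B \<subset> T}. kap q B r * q (T - B) r)"
    using assms(1) by (simp add: finite_PB')
  then show ?thesis using assms by (simp add: kap_unfold)
qed

lemma kap_singleton: "kap q {x} r = q {x} r"
proof -
  have "kap q {x} r = q {x} r - (\<Sum>B\<in>{B. Min {x} \<in> B \<and> B \<subset> {x}}. kap q B r * q ({x} - B) r)"
    by (rule kap_unfold) auto
  also have "{B. Min {x} \<in> B \<and> B \<subset> {x}} = {}" by auto
  finally show ?thesis by simp
qed

lemma kap_induct_card[consumes 1, case_names step]:
  assumes "finite T" and st: "\<And>T. finite T \<Longrightarrow> (\<And>B. B \<subset> T \<Longrightarrow> P B) \<Longrightarrow> P T"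
  shows "P T"
  using assms(1)
proof (induction "card T" arbitrary: T rule: less_induct)
  case less
  show ?case
  proof (rule st[OF less.prems])
    fix B assume "B \<subset> T"
    then show "P B" using less by (meson psubset_card_mono rev_finite_subset psubset_imp_subset)
  qed
qed

lemma kap_zero:
  assumes "\<And>T'. finite T' \<Longrightarrow> T' \<noteq> {} \<Longrightarrow> q T' 0 = 0" and fT: "finite T"
  shows "kap q T 0 = 0"
  using fT
proof (induction T rule: kap_induct_card)
  case (step T)
  show ?case
  proof (cases "T = {}")
    case False
    have "(\<Sum>B\<in>{B. Min T \<in> B \<and> B \<subset> T}. kap q B 0 * q (T - B) 0) = 0"
    proof (rule sum.neutral, intro ballI)
      fix B assume "B \<in> {B. Min T \<in> B \<and> B \<subset> T}"
      then have "B \<subset> T" by simp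
      moreover then have "finite B" using step by (meson finite_subset psubset_imp_subset)
      ultimately show "kap q B 0 * q (T - B) 0 = 0" using step by simp
    qed
    then show ?thesis using step False assms by (simp add: kap_unfold)
  qed simp
qed

lemma kap_poly:
  assumes "\<And>T'. ispoly (q T')" and fT: "finite T"
  shows "ispoly (kap q T)"
  using fT
proof (induction T rule: kap_induct_card)
  case (step T)
  show ?case
  proof (cases "T = {}")
    case True then show ?thesis by (simp add: ispoly_const)
  next
    case False
    have "kap q T = (\<lambda>r. q T r - (\<Sum>B\<in>{B. Min T \<in> B \<and> B \<subset> T}. kap q B r * q (T - B) r))"
      using step False by (intro ext) (simp add: kap_unfold)
    moreover have "ispoly (\<lambda>r. q T r - (\<Sum>B\<in>{B. Min T \<in> B \<and> B \<subset> T}. kap q B r * q (T - B) r))"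
    proof (intro ispoly_diff ispoly_sum ispoly_mult assms(1))
      show "finite {B. Min T \<in> B \<and> B \<subset> T}" using step by (simp add: finite_PB')
    next
      fix B assume "B \<in> {B. Min T \<in> B \<and> B \<subset> T}"
      then have "B \<subset> T" by simp
      moreover then have "finite B" using step by (meson finite_subset psubset_imp_subset)
      ultimately show "ispoly (kap q B)" using step by simp
    qed
    ultimately show ?thesis by simp
  qed
qed

lemma kap_refl0:
  fixes e :: "nat \<Rightarrow> nat"
  assumes h: "\<And>T' r. T' \<subseteq> U \<Longrightarrow> q T' (-1 - r) = (-1) ^ (\<Sum>x\<in>T'. e x) * q T' r"
    and fT: "finite T"
  shows "T \<subseteq> U \<longrightarrow> kap q T (-1 - r) = (-1) ^ (\<Sum>x\<in>T. e x) * kap q T r"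
  using fT
proof (induction T rule: kap_induct_card)
  case (step T)
  show ?case
  proof (cases "T = {}")
    case False
    show ?thesis
    proof
      assume TU: "T \<subseteq> U"
      have "(\<Sum>B\<in>{B. Min T \<in> B \<and> B \<subset> T}. kap q B (-1 - r) * q (T - B) (-1 - r)) =
            (\<Sum>B\<in>{B. Min T \<in> B \<and> B \<subset> T}. (-1) ^ (\<Sum>x\<in>T. e x) * (kap q B r * q (T - B) r))"
      proof (rule sum.cong[OF refl])
        fix B assume B: "B \<in> {B. Min T \<in> B \<and> B \<subset> T}"
        then have BT: "B \<subset> T" by simp
        have s: "(\<Sum>x\<in>T. e x) = (\<Sum>x\<in>B. e x) + (\<Sum>x\<in>T - B. e x)"
          using sum.subset_diff[of B T e] BT step(1) by auto
        have fB: "finite B" using step BT by (meson finite_subset psubset_imp_subset)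
        have "kap q B (-1 - r) = (-1) ^ (\<Sum>x\<in>B. e x) * kap q B r"
          using step(2)[OF BT] BT TU by auto
        moreover have "q (T - B) (-1 - r) = (-1) ^ (\<Sum>x\<in>T - B. e x) * q (T - B) r"
          by (rule h) (use TU in auto)
        ultimately show "kap q B (-1 - r) * q (T - B) (-1 - r) = (-1) ^ (\<Sum>x\<in>T. e x) * (kap q B r * q (T - B) r)"
          unfolding s power_add by (simp add: algebra_simps)
      qed
      then show "kap q T (-1 - r) = (-1) ^ (\<Sum>x\<in>T. e x) * kap q T r"
        using step False h[OF TU]
        by (simp add: kap_unfold sum_distrib_left right_diff_distrib)
    qed
  qed simp
qed

lemma kap_refl:
  fixes e :: "nat \<Rightarrow> nat"
  assumes "finite T" and h: "\<And>T' r. T' \<subseteq> T \<Longrightarrow> q T' (-1 - r) = (-1) ^ (\<Sum>x\<in>T'. e x) * q T' r"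
  shows "kap q T (-1 - r) = (-1) ^ (\<Sum>x\<in>T. e x) * kap q T r"
  using kap_refl0[of T q e T r, OF h assms(1)] by blast

definition chiG :: "(nat \<Rightarrow> int \<Rightarrow> rat) \<Rightarrow> nat \<Rightarrow> nat set \<Rightarrow> int \<Rightarrow> rat" where
  "chiG f n T r = odotZ (\<lambda>a. \<Prod>x\<in>T \<inter> {x. x < n}. f x a) (\<lambda>b. \<Prod>x\<in>T \<inter> - {x. x < n}. f x b) r"

lemma chiG_empty[simp]: "chiG f n {} r = 1"
  by (simp add: chiG_def odotZ_one_right)

definition shiftf :: "(nat \<Rightarrow> int \<Rightarrow> rat) \<Rightarrow> nat \<Rightarrow> rat \<Rightarrow> nat \<Rightarrow> int \<Rightarrow> rat" where
  "shiftf f y c = (\<lambda>x. if x = y then (\<lambda>a. f y a + c) else f x)"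

lemma prod_shift:
  assumes "finite S"
  shows "(\<Prod>x\<in>S. shiftf f y c x a) = (if y \<in> S then (\<Prod>x\<in>S. f x a) + c * (\<Prod>x\<in>S - {y}. f x a) else (\<Prod>x\<in>S. f x a))"
proof (cases "y \<in> S")
  case True
  have "(\<Prod>x\<in>S. shiftf f y c x a) = shiftf f y c y a * (\<Prod>x\<in>S - {y}. shiftf f y c x a)"
    using assms True by (simp add: prod.remove)
  also have "(\<Prod>x\<in>S - {y}. shiftf f y c x a) = (\<Prod>x\<in>S - {y}. f x a)"
    by (rule prod.cong) (auto simp: shiftf_def)
  also have "(\<Prod>x\<in>S. f x a) = f y a * (\<Prod>x\<in>S - {y}. f x a)"
    using assms True by (simp add: prod.remove)
  ultimately show ?thesis using True by (simp add: shiftf_def algebra_simps)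
next
  case False
  then show ?thesis by (auto simp: shiftf_def intro!: prod.cong)
qed

lemma chiG_shift:
  assumes "finite T"
  shows "chiG (shiftf f y c) n T r = (if y \<in> T then chiG f n T r + c * chiG f n (T - {y}) r else chiG f n T r)"
proof -
  let ?A = "{x. x < n}"
  have f1: "finite (T \<inter> ?A)" "finite (T \<inter> - ?A)" using assms by auto
  show ?thesis
  proof (cases "y \<in> T")
    case False
    then show ?thesis unfolding chiG_def by (simp add: prod_shift f1)
  next
    case True
    show ?thesis
    proof (cases "y < n")
      case yn: True
      have e1: "(T \<inter> ?A) - {y} = (T - {y}) \<inter> ?A" and e2: "(T - {y}) \<inter> - ?A = T \<inter> - ?A" using yn by auto
      show ?thesis unfolding chiG_def using True yn
        by (simp add: prod_shift f1 e1 e2 odotZ_add_left)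
    next
      case yn: False
      have e1: "(T \<inter> - ?A) - {y} = (T - {y}) \<inter> - ?A" and e2: "(T - {y}) \<inter> ?A = T \<inter> ?A" using yn by auto
      show ?thesis unfolding chiG_def using True yn
        by (simp add: prod_shift f1 e1 e2 odotZ_add_right)
    qed
  qed
qed

lemma kap_shift:
  assumes fT: "finite T"
  shows "kap (chiG (shiftf f y c) n) T r = kap (chiG f n) T r + (if T = {y} then c else 0)"
  using fT
proof (induction T rule: kap_induct_card)
  case (step T)
  let ?q = "chiG f n" and ?q' = "chiG (shiftf f y c) n"
  show ?case
  proof (cases "T = {}")
    case True then show ?thesis by simp
  next
    case ne: False
    let ?x0 = "Min T"
    let ?PB = "{B. ?x0 \<in> B \<and> B \<subset> T}"
    have fPB: "finite ?PB" using step(1) by (rule finite_PB')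
    have IH: "kap ?q' B r = kap ?q B r + (if B = {y} then c else 0)" if "B \<in> ?PB" for B
      using step(2)[of B] that by simp
    have fB: "finite B" if "B \<in> ?PB" for B
      using that step(1) by (auto intro: finite_subset)
    show ?thesis
    proof (cases "y \<in> T")
      case False
      have "(\<Sum>B\<in>?PB. kap ?q' B r * ?q' (T - B) r) = (\<Sum>B\<in>?PB. kap ?q B r * ?q (T - B) r)"
      proof (rule sum.cong[OF refl])
        fix B assume B: "B \<in> ?PB"
        then have "B \<noteq> {y}" using False by auto
        moreover have "y \<notin> T - B" using False by auto
        ultimately show "kap ?q' B r * ?q' (T - B) r = kap ?q B r * ?q (T - B) r"
          using IH[OF B] chiG_shift[of "T - B" f y c n r] step(1) False by simp
      qed
      moreover have "?q' T r = ?q T r" using chiG_shift[OF step(1), of f y c n r] False by simp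
      moreover have "T \<noteq> {y}" using False by auto
      ultimately show ?thesis
        unfolding kap_unfold[OF step(1) ne, of ?q'] kap_unfold[OF step(1) ne, of ?q] by simp
    next
      case yT: True
      define S1 where "S1 = (\<Sum>B\<in>?PB. if y \<notin> B then kap ?q B r * ?q (T - {y} - B) r else 0)"
      define S2 where "S2 = (\<Sum>B\<in>?PB. if B = {y} then ?q (T - B) r else 0)"
      have trm: "kap ?q' B r * ?q' (T - B) r = kap ?q B r * ?q (T - B) r +
          c * ((if y \<notin> B then kap ?q B r * ?q (T - {y} - B) r else 0) + (if B = {y} then ?q (T - B) r else 0))"
        if B: "B \<in> ?PB" for B
      proof -
        have fTB: "finite (T - B)" using step(1) by simp
        have e: "T - B - {y} = T - {y} - B" by auto
        show ?thesis
        proof (cases "B = {y}")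
          case True
          then have "y \<notin> T - B" by auto
          then show ?thesis using IH[OF B] chiG_shift[OF fTB, of f y c n r] True by (simp add: algebra_simps)
        next
          case nB: False
          show ?thesis
          proof (cases "y \<in> B")
            case True then show ?thesis using IH[OF B] chiG_shift[OF fTB, of f y c n r] nB by simp
          next
            case False
            then have "y \<in> T - B" using yT by auto
            then show ?thesis using IH[OF B] chiG_shift[OF fTB, of f y c n r] nB False e
              by (simp add: algebra_simps)
          qed
        qed
      qed
      have "(\<Sum>B\<in>?PB. kap ?q' B r * ?q' (T - B) r) = (\<Sum>B\<in>?PB. kap ?q B r * ?q (T - B) r) + c * (S1 + S2)"
        unfolding S1_def S2_def by (simp add: trm sum.distrib sum_distrib_left[symmetric])
      moreover have "?q' T r = ?q T r + c * ?q (T - {y}) r" using chiG_shift[OF step(1), of f y c n r] yT by simp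
      moreover have "?q (T - {y}) r - S1 - S2 = (if T = {y} then 1 else 0)"
      proof (cases "?x0 = y")
        case True
        have "S1 = 0" unfolding S1_def using True by (intro sum.neutral) auto
        moreover have "S2 = (if {y} \<in> ?PB then ?q (T - {y}) r else 0)"
          unfolding S2_def using fPB by (simp add: sum.delta)
        moreover have "({y} \<in> ?PB) = (T \<noteq> {y})" using True yT by auto
        ultimately show ?thesis by auto
      next
        case False
        have "S2 = 0" unfolding S2_def using False by (intro sum.neutral) auto
        moreover have "S1 = ?q (T - {y}) r"
        proof -
          have "S1 = (\<Sum>B\<in>{B\<in>?PB. y \<notin> B}. kap ?q B r * ?q (T - {y} - B) r)"
            unfolding S1_def by (rule sum.inter_filter[symmetric, OF fPB])
          also have "{B\<in>?PB. y \<notin> B} = {B. Min (T - {y}) \<in> B \<and> B \<subseteq> T - {y}}"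
          proof -
            have x0T: "?x0 \<in> T" using step(1) ne by simp
            have m: "Min (T - {y}) = ?x0"
              by (rule Min_eqI) (use step(1) x0T False in auto)
            show ?thesis using m yT by auto
          qed
          also have "(\<Sum>B\<in>{B. Min (T - {y}) \<in> B \<and> B \<subseteq> T - {y}}. kap ?q B r * ?q (T - {y} - B) r) = ?q (T - {y}) r"
          proof (rule kap_rec[symmetric])
            show "finite (T - {y})" using step(1) by simp
            show "T - {y} \<noteq> {}" using step(1) ne False Min_in by blast
          qed simp
          finally show ?thesis .
        qed
        moreover have "T \<noteq> {y}" using False ne by auto
        ultimately show ?thesis by simp
      qed
      ultimately show ?thesis
        unfolding kap_unfold[OF step(1) ne, of ?q'] kap_unfold[OF step(1) ne, of ?q] by (simp add: algebra_simps)
    qed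
  qed
qed

definition fU :: "(nat \<Rightarrow> int \<Rightarrow> rat) \<Rightarrow> (nat \<Rightarrow> rat) \<Rightarrow> nat set \<Rightarrow> nat \<Rightarrow> int \<Rightarrow> rat" where
  "fU f c U = (\<lambda>x. if x \<in> U then (\<lambda>a. f x a + c x) else f x)"

lemma iter_shift:
  assumes "finite U" "finite T" "T \<noteq> {}" "\<And>y. T \<noteq> {y}"
  shows "kap (chiG (fU f c U) n) T r = kap (chiG f n) T r"
  using assms(1)
proof (induction U rule: finite_induct)
  case empty
  have "fU f c {} = f" by (rule ext) (simp add: fU_def)
  then show ?case by simp
next
  case (insert y U)
  have "fU f c (insert y U) = shiftf (fU f c U) y (c y)"
    using insert(2) by (intro ext) (auto simp: fU_def shiftf_def)
  then show ?case using kap_shift[OF assms(2), of "fU f c U" y "c y" n r] insert(3) assms(4) by simp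
qed

lemma prod_refl:
  assumes "finite S" "\<And>x a. x \<in> S \<Longrightarrow> g x (-1 - a) = (-1) ^ e x * g x a"
  shows "(\<Prod>x\<in>S. g x (-1 - a)) = (-1) ^ (\<Sum>x\<in>S. e x) * (\<Prod>x\<in>S. g x a)"
proof -
  have "(\<Prod>x\<in>S. g x (-1 - a)) = (\<Prod>x\<in>S. (-1) ^ e x * g x a)"
    by (rule prod.cong) (auto simp: assms(2))
  also have "\<dots> = (\<Prod>x\<in>S. (-1) ^ e x) * (\<Prod>x\<in>S. g x a)" by (rule prod.distrib)
  also have "\<dots> = (-1) ^ (\<Sum>x\<in>S. e x) * (\<Prod>x\<in>S. g x a)" by (simp add: power_sum)
  finally show ?thesis .
qed

lemma chiG_refl:
  fixes e :: "nat \<Rightarrow> nat"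
  assumes "finite T" "\<And>x a. x \<in> T \<Longrightarrow> g x (-1 - a) = (-1) ^ e x * g x a"
  shows "chiG g n T (-1 - r) = (-1) ^ (\<Sum>x\<in>T. e x) * chiG g n T r"
proof -
  let ?A = "{x. x < n}"
  let ?s1 = "(-1::rat) ^ (\<Sum>x\<in>T \<inter> ?A. e x)" and ?s2 = "(-1::rat) ^ (\<Sum>x\<in>T \<inter> - ?A. e x)"
  have p1: "(\<Prod>x\<in>T \<inter> ?A. g x (-1 - a)) = ?s1 * (\<Prod>x\<in>T \<inter> ?A. g x a)" for a
    using assms by (intro prod_refl) auto
  have p2: "(\<Prod>x\<in>T \<inter> - ?A. g x (-1 - a)) = ?s2 * (\<Prod>x\<in>T \<inter> - ?A. g x a)" for a
    using assms by (intro prod_refl) auto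
  have ss: "?s1 * ?s2 * (?s1 * ?s2) = 1"
    by (simp add: power_add[symmetric] mult.assoc[symmetric] power_mult_distrib[symmetric])
  have e: "?s1 * ?s2 = (-1) ^ (\<Sum>x\<in>T. e x)"
  proof -
    have "(\<Sum>x\<in>T. e x) = (\<Sum>x\<in>T \<inter> ?A. e x) + (\<Sum>x\<in>T - ?A. e x)"
      using assms(1) by (rule sum.Int_Diff)
    moreover have "T - ?A = T \<inter> - ?A" by auto
    ultimately show ?thesis by (simp add: power_add)
  qed
  show ?thesis unfolding chiG_def
    using odotZ_refl[of "\<lambda>a. \<Prod>x\<in>T \<inter> ?A. g x a" ?s1 "\<lambda>b. \<Prod>x\<in>T \<inter> - ?A. g x b" ?s2, OF p1 p2 ss] e
    by simp
qed

lemma odotZ_0: "odotZ \<phi> \<psi> 0 = \<phi> 0 * \<psi> 0"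
  by (simp add: odotZ_def Cz_def ssum_def)

lemma chiG_zero:
  assumes "finite T" "T \<noteq> {}" "\<And>x. g x 0 = 0"
  shows "chiG g n T 0 = 0"
proof -
  obtain x where x: "x \<in> T" using assms(2) by auto
  show ?thesis
  proof (cases "x < n")
    case True
    then have "(\<Prod>x\<in>T \<inter> {x. x < n}. g x 0) = 0"
      using x assms by (intro prod_zero) auto
    then show ?thesis by (simp add: chiG_def odotZ_0)
  next
    case False
    then have "(\<Prod>x\<in>T \<inter> - {x. x < n}. g x 0) = 0"
      using x assms by (intro prod_zero) auto
    then show ?thesis by (simp add: chiG_def odotZ_0)
  qed
qed

lemma chiG_poly:
  assumes "finite T" "\<And>x. ispoly (g x)"
  shows "ispoly (chiG g n T)"
  unfolding chiG_def[abs_def]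
  by (intro ispoly_odotZ ispoly_prod assms) (use assms in auto)

lemma chiG_single: "chiG g n {x} r = g x r"
  by (cases "x < n") (simp_all add: chiG_def odotZ_one_right odotZ_one_left)


lemma neg_pow: "(- x) ^ j = (-1) ^ j * (x::rat) ^ j"
  by (subst power_mult_distrib[symmetric]) simp

lemma poly_neg_expand: "poly p (- x) = (\<Sum>j\<le>degree p. coeff p j * (-1) ^ j * x ^ j)" for x :: rat
  by (simp only: poly_altdef neg_pow[of x] mult.assoc)

lemma fin_lemma:
  assumes pk: "ispoly \<kappa>" and k0: "\<kappa> 0 = 0" and kr: "\<And>r. \<kappa> (-1 - r) = (-1) ^ K * \<kappa> r"
  shows "inT (\<lambda>p. \<Sum>m\<in>set_mset p. of_nat m ^ K * \<kappa> (int (count p m)))"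
proof -
  obtain P where P: "\<And>r. \<kappa> r = poly P (of_int r)" using pk unfolding ispoly_def by blast
  define pg where "pg = P - pcompose P [:-1, 1:]"
  have pg: "poly pg (of_int r) = \<kappa> r - \<kappa> (r - 1)" for r
    by (simp add: pg_def P poly_pcompose)
  have par: "poly pg (- of_int r) = - ((-1) ^ K * poly pg (of_int r))" for r
  proof -
    have a: "\<kappa> (-r) = (-1) ^ K * \<kappa> (r - 1)" using kr[of "r - 1"] by simp
    have "\<kappa> (-r - 1) = \<kappa> (-1 - r)" by (rule arg_cong[where f=\<kappa>]) simp
    then have b: "\<kappa> (-r - 1) = (-1) ^ K * \<kappa> r" using kr[of r] by simp
    have "poly pg (- of_int r) = \<kappa> (-r) - \<kappa> (-r - 1)" using pg[of "-r"] by simp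
    also have "\<dots> = (-1) ^ K * \<kappa> (r - 1) - (-1) ^ K * \<kappa> r" unfolding a b ..
    also have "\<dots> = - ((-1) ^ K * (\<kappa> r - \<kappa> (r - 1)))" by (simp add: algebra_simps)
    finally show ?thesis unfolding pg .
  qed
  define d where "d = degree pg"
  define c where "c j = coeff pg j" for j
  define Q where "Q = (\<Sum>j\<le>d. monom (c j * ((-1) ^ j + (-1) ^ K)) j)"
  have pQ: "poly Q x = poly pg (- x) + (-1) ^ K * poly pg x" for x
  proof -
    have "poly Q x = (\<Sum>j\<le>d. c j * ((-1) ^ j + (-1) ^ K) * x ^ j)"
      by (simp add: Q_def poly_sum poly_monom)
    also have "\<dots> = (\<Sum>j\<le>d. c j * (-1) ^ j * x ^ j) + (-1) ^ K * (\<Sum>j\<le>d. c j * x ^ j)"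
      by (simp add: sum_distrib_left sum.distrib[symmetric] distrib_left distrib_right mult.commute mult.left_commute)
    also have "\<dots> = poly pg (- x) + (-1) ^ K * poly pg x"
      unfolding poly_neg_expand by (simp add: poly_altdef d_def c_def)
    finally show ?thesis .
  qed
  have "Q = 0"
  proof (rule ccontr)
    assume "Q \<noteq> 0"
    then have "finite {x. poly Q x = 0}" by (rule poly_roots_finite)
    moreover have "range (of_int :: int \<Rightarrow> rat) \<subseteq> {x. poly Q x = 0}"
      using par pQ by auto
    moreover have "infinite (range (of_int :: int \<Rightarrow> rat))"
    proof -
      have "inj (of_int :: int \<Rightarrow> rat)" by (rule injI) simp
      then show ?thesis by (simp add: finite_image_iff infinite_UNIV_int)
    qed
    ultimately show False using finite_subset by blast
  qed
  have cz: "c j = 0" if "j \<le> d" "odd (K + j + 1)" for j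
  proof -
    have "coeff Q j = c j * ((-1) ^ j + (-1) ^ K)"
      using that(1) by (simp add: Q_def coeff_sum coeff_monom)
    moreover have "(-1::rat) ^ j + (-1) ^ K \<noteq> 0"
      using that(2) by (auto simp: minus_one_power_iff)
    ultimately show ?thesis using \<open>Q = 0\<close> by simp
  qed
  have kc: "\<kappa> (int a) = (\<Sum>j\<le>d. c j * faulhaber (j + 1) a)" for a
  proof (induction a)
    case 0 then show ?case by (simp add: k0 faulhaber_def)
  next
    case (Suc a)
    have "\<kappa> (int (Suc a)) = \<kappa> (int a) + poly pg (of_nat (Suc a))"
      using pg[of "int (Suc a)"] by simp
    also have "poly pg (of_nat (Suc a)) = (\<Sum>j\<le>d. c j * of_nat (Suc a) ^ j)"
      by (simp add: poly_altdef d_def c_def)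
    finally show ?case using Suc by (simp add: faulhaber_def sum.distrib[symmetric] algebra_simps)
  qed
  define G where "G j = (if c j = 0 then (\<lambda>_. 0) else (\<lambda>p. c j * Af K (j + 1) p))" for j
  have "inT (\<lambda>p. \<Sum>j\<le>d. G j p)"
  proof (rule inT_sum)
    fix j assume j: "j \<in> {..d}"
    show "inT (G j)"
    proof (cases "c j = 0")
      case True then show ?thesis by (simp add: G_def inT_const)
    next
      case False
      then have "even (K + (j + 1))" using cz[of j] j by auto
      then have "Af K (j + 1) \<in> T_alg" by (intro T_alg_Af) auto
      then show ?thesis using False by (simp add: G_def inT_smult inT_T)
    qed
  qed simp
  then show ?thesis
  proof (rule inT_cong)
    fix p assume p: "is_partition p"
    have "(\<Sum>j\<le>d. G j p) = (\<Sum>j\<le>d. c j * Af K (j + 1) p)"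
      by (rule sum.cong) (auto simp: G_def)
    also have "\<dots> = (\<Sum>j\<le>d. c j * (\<Sum>m\<in>set_mset p. of_nat m ^ K * faulhaber (j + 1) (count p m)))"
      using p by (simp add: Af_partition)
    also have "\<dots> = (\<Sum>m\<in>set_mset p. of_nat m ^ K * \<kappa> (int (count p m)))"
      by (simp add: kc sum_distrib_left sum.swap[of _ "set_mset p"] algebra_simps)
    finally show "(\<Sum>j\<le>d. G j p) = (\<Sum>m\<in>set_mset p. of_nat m ^ K * \<kappa> (int (count p m)))" .
  qed
qed


context
  fixes L L' :: "(nat \<times> nat) list"
  assumes vL: "valid L" and vL': "valid L'"
begin

definition "LLx = L @ L'"
definition "nx = length L"
definition "Nx = length (L @ L')"
definition "fF x = Fz (ll LLx x)"
definition "ccf x = (if ll LLx x = 1 then (1/2::rat) else 0)"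
definition "qq = chiG fF nx"
definition "ww p m T = of_nat m ^ Kw LLx T * qq T (int (count p m))"
definition "Zf S p = (\<Sum>k\<in>PiE S (\<lambda>_. set_mset p). \<Prod>m\<in>set_mset p. ww p m (fibS S k m))"
definition "Kf B p = (\<Sum>m\<in>set_mset p. of_nat m ^ Kw LLx B * kap qq B (int (count p m)))"

lemma validx: "x < Nx \<Longrightarrow> 1 \<le> ll LLx x \<and> even (kk LLx x + ll LLx x)"
proof -
  assume "x < Nx"
  then have mem: "LLx ! x \<in> set L \<or> LLx ! x \<in> set L'"
    unfolding LLx_def Nx_def by (metis nth_mem set_append Un_iff)
  obtain a b where ab: "LLx ! x = (a, b)" by fastforce
  have "1 \<le> b \<and> even (a + b)"
    using mem vL vL' unfolding valid_def ab by blast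
  then show ?thesis unfolding ll_def kk_def ab by simp
qed

lemma qq_empty: "qq {} r = 1" by (simp add: qq_def)

lemma ispoly_prod': "(\<And>i. i \<in> I \<Longrightarrow> ispoly (F i)) \<Longrightarrow> ispoly (\<lambda>n. \<Prod>i\<in>I. F i n)"
  by (cases "finite I") (simp_all add: ispoly_prod ispoly_const)

lemma qq_poly: "ispoly (qq T)"
  unfolding qq_def chiG_def[abs_def] by (intro ispoly_odotZ ispoly_prod') (simp_all add: fF_def ispoly_Fz)

lemma Kf_inT:
  assumes B: "B \<subseteq> {..<Nx}" "B \<noteq> {}"
  shows "inT (Kf B)"
proof (cases "\<exists>x. B = {x}")
  case True
  then obtain x where x: "B = {x}" by auto
  then have xN: "x < Nx" using B by auto
  have "Af (kk LLx x) (ll LLx x) \<in> T_alg" using validx[OF xN] by (intro T_alg_Af) auto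
  then have "inT (Af (kk LLx x) (ll LLx x))" by (rule inT_T)
  then show ?thesis
  proof (rule inT_cong)
    fix p assume p: "is_partition p"
    show "Af (kk LLx x) (ll LLx x) p = Kf B p"
      unfolding Af_partition[OF p subset_mset.order_refl] Kf_def x
      by (simp add: kap_singleton qq_def chiG_single fF_def Fz_nat Kw_def)
  qed
next
  case False
  have fB: "finite B" using B(1) finite_subset by blast
  define K where "K = Kw LLx B"
  have "inT (\<lambda>p. \<Sum>m\<in>set_mset p. of_nat m ^ K * kap qq B (int (count p m)))"
  proof (rule fin_lemma)
    show "ispoly (kap qq B)" by (intro kap_poly qq_poly fB)
    show "kap qq B 0 = 0"
    proof (rule kap_zero[OF _ fB])
      fix T' :: "nat set" assume "finite T'" "T' \<noteq> {}"
      then show "qq T' 0 = 0" unfolding qq_def by (intro chiG_zero) (auto simp: fF_def)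
    qed
    fix r
    define g where "g = fU fF ccf {..<Nx}"
    have shift: "kap qq B s = kap (chiG g nx) B s" for s
      unfolding qq_def g_def using False B(2) fB by (intro iter_shift[symmetric]) auto
    have rg: "g x (-1 - a) = (-1) ^ ll LLx x * g x a" if "x \<in> B" for x a
    proof -
      have "x < Nx" using that B by auto
      then have "g x = Fh (ll LLx x)" and "1 \<le> ll LLx x"
        using validx by (auto simp: g_def fU_def fF_def ccf_def Fh_def[abs_def])
      then show ?thesis by (simp add: Fh_refl)
    qed
    have "kap (chiG g nx) B (-1 - r) = (-1) ^ (\<Sum>x\<in>B. ll LLx x) * kap (chiG g nx) B r"
    proof (rule kap_refl[OF fB])
      fix T' :: "nat set" and s assume T': "T' \<subseteq> B"
      show "chiG g nx T' (-1 - s) = (-1) ^ (\<Sum>x\<in>T'. ll LLx x) * chiG g nx T' s"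
        using T' fB rg by (intro chiG_refl) (auto intro: finite_subset)
    qed
    moreover have "(-1::rat) ^ (\<Sum>x\<in>B. ll LLx x) = (-1) ^ K"
    proof -
      have "(-1::rat) ^ (\<Sum>x\<in>B. ll LLx x) = (\<Prod>x\<in>B. (-1) ^ ll LLx x)" by (simp add: power_sum)
      also have "\<dots> = (\<Prod>x\<in>B. (-1) ^ kk LLx x)"
      proof (rule prod.cong[OF refl])
        fix x assume "x \<in> B"
        then have "even (kk LLx x + ll LLx x)" using validx B by auto
        then show "(-1::rat) ^ ll LLx x = (-1) ^ kk LLx x"
          by (metis (no_types, lifting) even_add neg_one_even_power neg_one_odd_power)
      qed
      also have "\<dots> = (-1) ^ K" by (simp add: K_def Kw_def power_sum)
      finally show ?thesis .
    qed
    ultimately show "kap qq B (-1 - r) = (-1) ^ K * kap qq B r" by (simp add: shift)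
  qed
  then show ?thesis unfolding Kf_def K_def by simp
qed

lemma Zf_empty: "Zf {} = (\<lambda>_. 1)"
  by (rule ext) (simp add: Zf_def ww_def fibS_def qq_empty Kw_def)

lemma Zf_rec:
  assumes fS: "finite S" and ne: "S \<noteq> {}"
  shows "Zf S p = (\<Sum>B\<in>{B. Min S \<in> B \<and> B \<subseteq> S}. Kf B p * Zf (S - B) p)"
proof -
  let ?x0 = "Min S"
  have x0: "?x0 \<in> S" using fS ne by simp
  have "Zf S p = (\<Sum>B\<in>{B. ?x0 \<in> B \<and> B \<subseteq> S}. (\<Sum>m\<in>set_mset p. of_nat m ^ Kw LLx B * kap qq B (int (count p m))) *
             (\<Sum>k\<in>PiE (S - B) (\<lambda>_. set_mset p). \<Prod>m\<in>set_mset p. ww p m (fibS (S - B) k m)))"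
    unfolding Zf_def
  proof (rule ALG[OF fS x0 finite_set_mset])
    fix m T assume m: "m \<in> set_mset p" and T: "T \<subseteq> S" "?x0 \<in> T"
    have fT: "finite T" using T fS finite_subset by blast
    have mT: "Min T = ?x0"
      using T fS fT by (metis Min_antimono Min_le antisym empty_iff)
    have "qq T (int (count p m)) = (\<Sum>B\<in>{B. ?x0 \<in> B \<and> B \<subseteq> T}. kap qq B (int (count p m)) * qq (T - B) (int (count p m)))"
    proof -
      have "T \<noteq> {}" using T by auto
      from kap_rec[of T qq "int (count p m)", OF fT this qq_empty] show ?thesis using mT by simp
    qed
    then have "ww p m T = (\<Sum>B\<in>{B. ?x0 \<in> B \<and> B \<subseteq> T}. of_nat m ^ Kw LLx T * (kap qq B (int (count p m)) * qq (T - B) (int (count p m))))"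
      unfolding ww_def by (simp add: sum_distrib_left)
    also have "\<dots> = (\<Sum>B\<in>{B. ?x0 \<in> B \<and> B \<subseteq> T}. (of_nat m ^ Kw LLx B * kap qq B (int (count p m))) * ww p m (T - B))"
    proof (rule sum.cong[OF refl])
      fix B assume "B \<in> {B. ?x0 \<in> B \<and> B \<subseteq> T}"
      then have "B \<subseteq> T" by simp
      then have "Kw LLx T = Kw LLx B + Kw LLx (T - B)"
        unfolding Kw_def using fT sum.subset_diff[of B T "kk LLx"] by simp
      then show "of_nat m ^ Kw LLx T * (kap qq B (int (count p m)) * qq (T - B) (int (count p m))) =
          (of_nat m ^ Kw LLx B * kap qq B (int (count p m))) * ww p m (T - B)"
        unfolding ww_def by (simp add: power_add algebra_simps)
    qed
    finally show "ww p m T = (\<Sum>B\<in>{B. ?x0 \<in> B \<and> B \<subseteq> T}. (of_nat m ^ Kw LLx B * kap qq B (int (count p m))) * ww p m (T - B))" .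
  qed
  then show ?thesis unfolding Kf_def Zf_def by simp
qed

lemma Zf_inT: "finite S \<Longrightarrow> S \<subseteq> {..<Nx} \<Longrightarrow> inT (Zf S)"
proof (induction S rule: kap_induct_card)
  case (step S)
  show ?case
  proof (cases "S = {}")
    case True then show ?thesis by (simp add: Zf_empty inT_const)
  next
    case False
    have "inT (\<lambda>p. \<Sum>B\<in>{B. Min S \<in> B \<and> B \<subseteq> S}. Kf B p * Zf (S - B) p)"
    proof (rule inT_sum)
      show "finite {B. Min S \<in> B \<and> B \<subseteq> S}" using step(1) by (rule finite_PB)
      fix B assume B: "B \<in> {B. Min S \<in> B \<and> B \<subseteq> S}"
      then have "S - B \<subset> S" by auto
      then have "inT (Zf (S - B))" using step by auto
      moreover have "inT (Kf B)" using B step(3) by (intro Kf_inT) auto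
      ultimately show "inT (\<lambda>p. Kf B p * Zf (S - B) p)" by (rule inT_mult[rotated])
    qed
    then show ?thesis
      by (rule inT_cong) (simp add: Zf_rec[OF step(1) False])
  qed
qed

lemma key_ctx: "inT (odotF (Mon L) (Mon L'))"
proof -
  have "inT (Zf {..<Nx})" by (rule Zf_inT) auto
  then show ?thesis
  proof (rule inT_cong)
    fix p assume p: "is_partition p"
    have "odotF (Mon L) (Mon L') p = (\<Sum>k\<in>PiE {..<Nx} (\<lambda>_. set_mset p). \<Prod>m\<in>set_mset p.
        of_nat m ^ Kw LLx (fib Nx k m) * chiN (PhiF LLx nx (fib Nx k m)) (PsiF LLx nx (fib Nx k m)) (count p m))"
      unfolding LLx_def nx_def Nx_def by (rule odot_expand[OF p])
    also have "\<dots> = Zf {..<Nx} p"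
      unfolding Zf_def
    proof (intro sum.cong prod.cong refl)
      fix k m
      have fe: "fib Nx k m = fibS {..<Nx} k m" by (simp add: fib_def fibS_def)
      have ph: "PhiF LLx nx T = (\<lambda>a. (\<lambda>a. \<Prod>x\<in>T \<inter> {x. x < nx}. fF x a) (int a))" for T
        by (rule ext) (simp add: PhiF_def fF_def Fz_nat)
      have ps: "PsiF LLx nx T = (\<lambda>a. (\<lambda>a. \<Prod>x\<in>T \<inter> - {x. x < nx}. fF x a) (int a))" for T
        by (rule ext) (simp add: PsiF_def fF_def Fz_nat)
      show "of_nat m ^ Kw LLx (fib Nx k m) * chiN (PhiF LLx nx (fib Nx k m)) (PsiF LLx nx (fib Nx k m)) (count p m)
          = ww p m (fibS {..<Nx} k m)"
        unfolding ww_def fe ph ps qq_def chiG_def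
        using chiN_odotZ[of "\<lambda>a. \<Prod>x\<in>fibS {..<Nx} k m \<inter> {x. x < nx}. fF x a"
            "\<lambda>b. \<Prod>x\<in>fibS {..<Nx} k m \<inter> - {x. x < nx}. fF x b" "count p m"] by simp
    qed
    finally show "Zf {..<Nx} p = odotF (Mon L) (Mon L') p" by simp
  qed
qed

end

theorem theorem4p2p1:
  assumes "f \<in> T_alg" and "g \<in> T_alg"
  shows "\<exists>h\<in>T_alg. u_bracket h = ser_mult (u_bracket f) (u_bracket g)"
  using final_from_key[OF key_ctx assms] .


end
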